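(* Let $\Theta=\{1,2\}$ and let $P_1,\dots,P_m$ be experiments ($P_i:\Theta\to\Delta(Y_i)$, $Y_i$ finite) such that $w(P_1)>\max\{w(P_i):i\ne1\}$. Then for every decision problem $(A,u)$ there exists $t^*$ such that for all integers $t\ge t^*$, $$V(P_1^t,\dots,P_m^t;(A,u))=V(P_1^t;(A,u)).$$
   Context: A decision problem is a pair $(A,u)$ with $A$ a finite nonempty action set and $u:\Theta\times A\to\mathbb{R}$; for $\alpha\in\Delta(A)$ write $u(\theta,\alpha)=\sum_a\alpha(a)u(\theta,a)$. An experiment is a map $P:\Theta\to\Delta(Y)$ with $Y$ a finite signal set. Given experiments $Q_j:\Theta\to\Delta(Z_j)$, $j=1,\dots,m$, let $\mathbf Z=Z_1\times\cdots\times Z_m$ and let $\mathcal P(Q_1,\dots,Q_m)$ be the set of experiments $Q:\Theta\to\Delta(\mathbf Z)$ whose $j$-th marginal is $Q_j(\cdot|\theta)$ for every $\theta$ and $j$. Define $V(Q_1,\dots,Q_m;(A,u))=\max_{\sigma:\mathbf Z\to\Delta(A)}\min_{Q\in\mathcal P(Q_1,\dots,Q_m)}\sum_{\theta}\sum_{\mathbf z}Q(\mathbf z|\theta)u(\theta,\sigma(\mathbf z))$; for a single experiment, $V(Q;(A,u))=\max_{\sigma:Z\to\Delta(A)}\sum_\theta\sum_z Q(z|\theta)u(\theta,\sigma(z))$. For an experiment $P:\Theta\to\Delta(Y)$ and integer $t\ge1$, $P^t:\Theta\to\Delta(Y^t)$ is the experiment of $t$ i.i.d. draws: $P^t(y_1,\dots,y_t|\theta)=\prod_{\tau=1}^tP(y_\tau|\theta)$.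 For an experiment $P$ with $\Theta=\{1,2\}$, $w(P)$ denotes the Chernoff distance between $P(\cdot|1)$ and $P(\cdot|2)$: $w(P)=-\min_{s\in[0,1]}\log\sum_{y\in Y}P(y|1)^sP(y|2)^{1-s}$, equivalently $w(P)=\min_{\nu\in\Delta(Y)}\max_{\theta\in\Theta}KL(\nu,P(\cdot|\theta))$ where $KL(\nu,\nu')=\sum_y\nu(y)\log\frac{\nu(y)}{\nu'(y)}$. *)

theory Defs
  imports "HOL-Analysis.Analysis" "HOL-Library.Extended_Real"
begin

text \<open>States: Theta = {1,2}. An experiment on a finite signal set Y is
  a function P :: nat \<Rightarrow> 'y \<Rightarrow> real, P theta y = P(y|theta).\<close>

definition Theta :: "nat set" where "Theta = {1, 2}"

definition is_dist :: "'x set \<Rightarrow> ('x \<Rightarrow> real) \<Rightarrow> bool" where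
  "is_dist S p \<longleftrightarrow> (\<forall>x\<in>S. 0 \<le> p x) \<and> sum p S = 1"

definition is_experiment :: "nat set \<Rightarrow> 'y set \<Rightarrow> (nat \<Rightarrow> 'y \<Rightarrow> real) \<Rightarrow> bool" where
  "is_experiment Th Y P \<longleftrightarrow> finite Y \<and> (\<forall>\<theta>\<in>Th. is_dist Y (P \<theta>))"

text \<open>t i.i.d. draws: signals are functions on {..<t} with values in Y.\<close>
definition power_carrier :: "nat \<Rightarrow> 'y set \<Rightarrow> (nat \<Rightarrow> 'y) set" where
  "power_carrier t Y = PiE {..<t} (\<lambda>_. Y)"

definition power_exp :: "(nat \<Rightarrow> 'y \<Rightarrow> real) \<Rightarrow> nat \<Rightarrow> nat \<Rightarrow> (nat \<Rightarrow> 'y) \<Rightarrow> real" where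
  "power_exp P t \<theta> ys = (\<Prod>\<tau><t. P \<theta> (ys \<tau>))"

definition strategies :: "'z set \<Rightarrow> 'a set \<Rightarrow> ('z \<Rightarrow> 'a \<Rightarrow> real) set" where
  "strategies Z A = {\<sigma>. \<forall>z\<in>Z. is_dist A (\<sigma> z)}"

definition payoff :: "nat set \<Rightarrow> 'z set \<Rightarrow> (nat \<Rightarrow> 'z \<Rightarrow> real) \<Rightarrow> 'a set
    \<Rightarrow> (nat \<Rightarrow> 'a \<Rightarrow> real) \<Rightarrow> ('z \<Rightarrow> 'a \<Rightarrow> real) \<Rightarrow> real" where
  "payoff Th Z Q A u \<sigma> = (\<Sum>\<theta>\<in>Th. \<Sum>z\<in>Z. Q \<theta> z * (\<Sum>a\<in>A. \<sigma> z a * u \<theta> a))"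

definition couplings :: "nat set \<Rightarrow> nat set \<Rightarrow> (nat \<Rightarrow> 'z set) \<Rightarrow> (nat \<Rightarrow> nat \<Rightarrow> 'z \<Rightarrow> real)
    \<Rightarrow> (nat \<Rightarrow> (nat \<Rightarrow> 'z) \<Rightarrow> real) set" where
  "couplings Th I Z Q = {R. (\<forall>\<theta>\<in>Th. is_dist (PiE I Z) (R \<theta>)) \<and>
      (\<forall>\<theta>\<in>Th. \<forall>j\<in>I. \<forall>zj\<in>Z j. (\<Sum>z\<in>{z\<in>PiE I Z. z j = zj}. R \<theta> z) = Q j \<theta> zj)}"

definition V_multi :: "nat set \<Rightarrow> nat set \<Rightarrow> (nat \<Rightarrow> 'z set) \<Rightarrow> (nat \<Rightarrow> nat \<Rightarrow> 'z \<Rightarrow> real)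
    \<Rightarrow> 'a set \<Rightarrow> (nat \<Rightarrow> 'a \<Rightarrow> real) \<Rightarrow> real" where
  "V_multi Th I Z Q A u =
     (SUP \<sigma>\<in>strategies (PiE I Z) A. INF R\<in>couplings Th I Z Q. payoff Th (PiE I Z) R A u \<sigma>)"

definition V_single :: "nat set \<Rightarrow> 'z set \<Rightarrow> (nat \<Rightarrow> 'z \<Rightarrow> real)
    \<Rightarrow> 'a set \<Rightarrow> (nat \<Rightarrow> 'a \<Rightarrow> real) \<Rightarrow> real" where
  "V_single Th Z Q A u = (SUP \<sigma>\<in>strategies Z A. payoff Th Z Q A u \<sigma>)"

text \<open>x^s with the convention x^0 = 1 (also for x = 0).\<close>
definition pw :: "real \<Rightarrow> real \<Rightarrow> real" where
  "pw x s = (if s = 0 then 1 else x powr s)"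

definition chernoff_coeff :: "'y set \<Rightarrow> (nat \<Rightarrow> 'y \<Rightarrow> real) \<Rightarrow> real" where
  "chernoff_coeff Y P = (INF s\<in>{0..1}. \<Sum>y\<in>Y. pw (P 1 y) s * pw (P 2 y) (1 - s))"

definition chernoff :: "'y set \<Rightarrow> (nat \<Rightarrow> 'y \<Rightarrow> real) \<Rightarrow> ereal" where
  "chernoff Y P = (if chernoff_coeff Y P = 0 then \<infinity> else ereal (- ln (chernoff_coeff Y P)))"

end

theory Submission
  imports Defs
begin


lemma prod_sum_power:
  fixes h :: "'a \<Rightarrow> 'b::comm_semiring_1"
  assumes "finite S"
  shows "(\<Sum>z\<in>PiE {..<t} (\<lambda>_. S). \<Prod>\<tau><t. h (z \<tau>)) = (\<Sum>y\<in>S. h y) ^ t"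
proof -
  have "(\<Prod>\<tau><t. \<Sum>y\<in>S. h y) = (\<Sum>z\<in>PiE {..<t} (\<lambda>_. S). \<Prod>\<tau><t. h (z \<tau>))"
    using prod_sum_PiE[of "{..<t}" "\<lambda>_. S" "\<lambda>_ y. h y"] assms by auto
  thus ?thesis by simp
qed

lemma pw_prod:
  assumes "\<And>x. x \<in> I \<Longrightarrow> 0 \<le> f x"
  shows "pw (\<Prod>x\<in>I. f x) s = (\<Prod>x\<in>I. pw (f x) s)"
  using assms by (simp add: pw_def prod_powr_distrib)

lemma min_le_pw:
  fixes a b s :: real
  assumes "0 \<le> a" "0 \<le> b" "0 \<le> s" "s \<le> 1"
  shows "min a b \<le> pw a s * pw b (1 - s)"
proof (cases "s = 0")
  case True thus ?thesis using assms by (cases "b = 0") (auto simp: pw_def)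
next
  case s0: False
  show ?thesis
  proof (cases "s = 1")
    case True thus ?thesis using assms by (cases "a = 0") (auto simp: pw_def)
  next
    case s1: False
    show ?thesis
    proof (cases "a = 0 \<or> b = 0")
      case True thus ?thesis using assms s0 s1 by (auto simp: pw_def)
    next
      case False
      hence ab: "0 < a" "0 < b" using assms by auto
      have "min a b = min a b powr s * min a b powr (1 - s)"
        using ab by (simp add: powr_add[symmetric])
      also have "\<dots> \<le> a powr s * b powr (1 - s)"
        using ab assms by (intro mult_mono powr_mono2) auto
      finally show ?thesis using s0 s1 by (simp add: pw_def)
    qed
  qed
qed

definition Mmix :: "nat \<Rightarrow> 'y set \<Rightarrow> (nat \<Rightarrow> 'y \<Rightarrow> real) \<Rightarrow> real" where
  "Mmix t Y P = (\<Sum>z\<in>power_carrier t Y. min (power_exp P t 1 z) (power_exp P t 2 z))"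

definition cf :: "'y set \<Rightarrow> (nat \<Rightarrow> 'y \<Rightarrow> real) \<Rightarrow> real \<Rightarrow> real" where
  "cf Y P s = (\<Sum>y\<in>Y. pw (P 1 y) s * pw (P 2 y) (1 - s))"

lemma exp_Theta:
  assumes "is_experiment Theta Y P"
  shows "finite Y" "\<And>y. y \<in> Y \<Longrightarrow> 0 \<le> P 1 y" "\<And>y. y \<in> Y \<Longrightarrow> 0 \<le> P 2 y"
    "sum (P 1) Y = 1" "sum (P 2) Y = 1"
  using assms by (auto simp: is_experiment_def is_dist_def Theta_def)

lemma pw_nonneg: "0 \<le> x \<Longrightarrow> 0 \<le> pw x s"
  by (simp add: pw_def)

lemma cf_nonneg:
  assumes "is_experiment Theta Y P"
  shows "0 \<le> cf Y P s"
  unfolding cf_def using exp_Theta[OF assms] by (intro sum_nonneg mult_nonneg_nonneg pw_nonneg) auto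

lemma chernoff_coeff_lower:
  assumes "is_experiment Theta Y P" "s \<in> {0..1}"
  shows "chernoff_coeff Y P \<le> cf Y P s"
  unfolding chernoff_coeff_def cf_def[symmetric]
  using assms cf_nonneg[OF assms(1)]
  by (intro cINF_lower) (auto intro!: bdd_belowI[where m=0])

lemma chernoff_coeff_nonneg:
  assumes "is_experiment Theta Y P"
  shows "0 \<le> chernoff_coeff Y P"
  unfolding chernoff_coeff_def cf_def[symmetric]
  using cf_nonneg[OF assms] by (intro cINF_greatest) auto

lemma chernoff_coeff_less:
  assumes "is_experiment Theta Y P" "chernoff_coeff Y P < c"
  shows "\<exists>s\<in>{0..1}. cf Y P s < c"
  using assms unfolding chernoff_coeff_def cf_def[symmetric]
  by (subst (asm) cINF_less_iff) (auto intro!: bdd_belowI[where m=0] cf_nonneg)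

lemma Mmix_upper:
  assumes "is_experiment Theta Y P" "s \<in> {0..1}"
  shows "Mmix t Y P \<le> cf Y P s ^ t"
proof -
  note e = exp_Theta[OF assms(1)]
  have "Mmix t Y P \<le> (\<Sum>z\<in>power_carrier t Y. \<Prod>\<tau><t. pw (P 1 (z \<tau>)) s * pw (P 2 (z \<tau>)) (1 - s))"
    unfolding Mmix_def
  proof (intro sum_mono)
    fix z assume z: "z \<in> power_carrier t Y"
    have nn: "\<And>\<theta> \<tau>. \<theta> \<in> {1,2} \<Longrightarrow> \<tau> < t \<Longrightarrow> 0 \<le> P \<theta> (z \<tau>)"
      using z e unfolding power_carrier_def by (auto simp: PiE_iff)
    have "min (power_exp P t 1 z) (power_exp P t 2 z) \<le> pw (power_exp P t 1 z) s * pw (power_exp P t 2 z) (1 - s)"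
      using assms(2) nn unfolding power_exp_def by (intro min_le_pw prod_nonneg) auto
    also have "\<dots> = (\<Prod>\<tau><t. pw (P 1 (z \<tau>)) s) * (\<Prod>\<tau><t. pw (P 2 (z \<tau>)) (1 - s))"
      unfolding power_exp_def using nn by (subst (1 2) pw_prod) auto
    also have "\<dots> = (\<Prod>\<tau><t. pw (P 1 (z \<tau>)) s * pw (P 2 (z \<tau>)) (1 - s))"
      by (simp add: prod.distrib)
    finally show "min (power_exp P t 1 z) (power_exp P t 2 z) \<le> \<dots>" .
  qed
  also have "\<dots> = cf Y P s ^ t"
    unfolding power_carrier_def cf_def by (rule prod_sum_power[OF e(1)])
  finally show ?thesis .
qed



lemma sum_Un_le_nonneg:
  fixes f :: "'a \<Rightarrow> real"
  assumes "finite A" "finite B" "\<And>x. x \<in> A \<union> B \<Longrightarrow> 0 \<le> f x"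
  shows "sum f (A \<union> B) \<le> sum f A + sum f B"
proof -
  have "sum f (A \<union> B) = sum f A + sum f B - sum f (A \<inter> B)"
    using assms by (simp add: sum_Un)
  moreover have "0 \<le> sum f (A \<inter> B)" using assms by (intro sum_nonneg) auto
  ultimately show ?thesis by simp
qed

lemma ex_dec_right:
  assumes "(k has_real_derivative l) (at x)" "l < 0"
  shows "\<exists>h>0. k (x + h) < k x"
proof -
  obtain d where "d > 0" "\<forall>h>0. h < d \<longrightarrow> k (x + h) < k x"
    using DERIV_neg_dec_right[OF assms] by blast
  thus ?thesis by (intro exI[of _ "d/2"]) auto
qed

lemma tail_aux:
  fixes s L E :: real
  assumes "0 \<le> s" "s \<le> 1" "0 \<le> E" "s < 1 \<Longrightarrow> -E \<le> L" "0 < s \<Longrightarrow> L \<le> E"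
  shows "-E \<le> (1 - s) * L" "-E \<le> - (s * L)"
proof -
  show "-E \<le> (1 - s) * L"
  proof (cases "s < 1")
    case True
    show ?thesis
    proof (cases "L \<ge> 0")
      case True
      have "0 \<le> (1 - s) * L" using True assms by simp
      thus ?thesis using assms by linarith
    next
      case False
      have "(1 - s) * L \<ge> 1 * L" using False assms by (intro mult_right_mono_neg) auto
      thus ?thesis using assms(4)[OF \<open>s<1\<close>] by simp
    qed
  next
    case False thus ?thesis using assms by simp
  qed
  show "-E \<le> - (s * L)"
  proof (cases "0 < s")
    case True
    show ?thesis
    proof (cases "L \<le> 0")
      case True
      have "s * L \<le> 0" using True assms by (simp add: mult_nonneg_nonpos)
      thus ?thesis using assms by linarith
    next
      case False
      have "s * L \<le> 1 * L" using False assms by (intro mult_right_mono) auto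
      thus ?thesis using assms(5)[OF \<open>0<s\<close>] by simp
    qed
  next
    case False thus ?thesis using assms by simp
  qed
qed



definition supp2 :: "'y set \<Rightarrow> (nat \<Rightarrow> 'y \<Rightarrow> real) \<Rightarrow> 'y set" where
  "supp2 Y P = {y\<in>Y. 0 < P 1 y \<and> 0 < P 2 y}"

definition gfun :: "'y set \<Rightarrow> (nat \<Rightarrow> 'y \<Rightarrow> real) \<Rightarrow> real \<Rightarrow> real" where
  "gfun Y P s = (\<Sum>y\<in>supp2 Y P. exp (s * ln (P 1 y) + (1 - s) * ln (P 2 y)))"

lemma gfun_nonneg: "0 \<le> gfun Y P s"
  unfolding gfun_def by (intro sum_nonneg) auto

lemma comb_bound:
  assumes ex: "is_experiment Theta Y P"
    and s0: "0 \<le> s0" "s0 \<le> 1" and eps: "0 \<le> \<epsilon>" and l: "0 < l1" "0 < l2"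
  shows "exp (-(\<epsilon> * real t)) * (gfun Y P s0 ^ t
      - (if s0 < 1 then (exp (-(l1 * \<epsilon>)) * gfun Y P (s0 - l1)) ^ t else 0)
      - (if 0 < s0 then (exp (-(l2 * \<epsilon>)) * gfun Y P (s0 + l2)) ^ t else 0)) \<le> Mmix t Y P"
proof -
  note e = exp_Theta[OF ex]
  define S where "S = supp2 Y P"
  have finS: "finite S" and SY: "S \<subseteq> Y" using e(1) by (auto simp: S_def supp2_def)
  have Spos: "\<And>y \<theta>. y \<in> S \<Longrightarrow> \<theta> \<in> {1,2} \<Longrightarrow> 0 < P \<theta> y" by (auto simp: S_def supp2_def)
  define St where "St = PiE {..<t} (\<lambda>_. S)"
  have finSt: "finite St" unfolding St_def using finS by (intro finite_PiE) auto
  have StY: "St \<subseteq> power_carrier t Y" unfolding St_def power_carrier_def using SY by (intro PiE_mono) auto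
  define LA where "LA z = (\<Sum>\<tau><t. ln (P 1 (z \<tau>)))" for z :: "nat \<Rightarrow> 'a"
  define LB where "LB z = (\<Sum>\<tau><t. ln (P 2 (z \<tau>)))" for z :: "nat \<Rightarrow> 'a"
  define Lam where "Lam z = LA z - LB z" for z
  define W where "W s z = exp (s * LA z + (1 - s) * LB z)" for s z
  have Wsum: "(\<Sum>z\<in>St. W s z) = gfun Y P s ^ t" for s
  proof -
    have "W s z = (\<Prod>\<tau><t. exp (s * ln (P 1 (z \<tau>)) + (1 - s) * ln (P 2 (z \<tau>))))" for z
    proof -
      have "s * LA z + (1 - s) * LB z = (\<Sum>\<tau><t. s * ln (P 1 (z \<tau>)) + (1 - s) * ln (P 2 (z \<tau>)))"
        unfolding LA_def LB_def by (simp add: sum_distrib_left sum.distrib)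
      thus ?thesis unfolding W_def by (simp add: exp_sum)
    qed
    hence "(\<Sum>z\<in>St. W s z) = (\<Sum>z\<in>St. \<Prod>\<tau><t. exp (s * ln (P 1 (z \<tau>)) + (1 - s) * ln (P 2 (z \<tau>))))"
      by simp
    also have "\<dots> = gfun Y P s ^ t"
      unfolding St_def gfun_def S_def[symmetric] by (rule prod_sum_power[OF finS])
    finally show ?thesis .
  qed
  have Wshift: "W s z * exp (l * Lam z) = W (s + l) z" for s l z
    unfolding W_def Lam_def by (simp add: exp_add[symmetric] algebra_simps)
  have Wpos: "0 \<le> W s z" for s z unfolding W_def by simp
  define E where "E = \<epsilon> * real t"
  have E0: "0 \<le> E" unfolding E_def using eps by simp
  define Lo where "Lo = (if s0 < 1 then {z\<in>St. Lam z < -E} else {})"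
  define Up where "Up = (if 0 < s0 then {z\<in>St. E < Lam z} else {})"
  define G where "G = St - (Lo \<union> Up)"
  have LoSt: "Lo \<subseteq> St" and UpSt: "Up \<subseteq> St" unfolding Lo_def Up_def by auto
  have finLo: "finite Lo" and finUp: "finite Up" using LoSt UpSt finSt finite_subset by blast+
  have expE: "exp (- (c * E)) = exp (-(c * \<epsilon>)) ^ t" for c
  proof -
    have "exp (- (c * E)) = exp (real t * (-(c * \<epsilon>)))"
      by (rule arg_cong[where f=exp]) (simp add: E_def algebra_simps)
    also have "\<dots> = exp (-(c * \<epsilon>)) ^ t" by (rule exp_of_nat_mult)
    finally show ?thesis .
  qed
  have Lo_bound: "(\<Sum>z\<in>Lo. W s0 z) \<le> (if s0 < 1 then (exp (-(l1 * \<epsilon>)) * gfun Y P (s0 - l1)) ^ t else 0)"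
  proof (cases "s0 < 1")
    case False thus ?thesis unfolding Lo_def by simp
  next
    case True
    have "(\<Sum>z\<in>Lo. W s0 z) \<le> (\<Sum>z\<in>Lo. W s0 z * exp (- l1 * (Lam z + E)))"
    proof (intro sum_mono)
      fix z assume "z \<in> Lo"
      hence "Lam z + E < 0" using True unfolding Lo_def by auto
      hence "1 \<le> exp (- l1 * (Lam z + E))" using l by (simp add: mult_pos_neg less_imp_le)
      thus "W s0 z \<le> W s0 z * exp (- l1 * (Lam z + E))" using Wpos[of s0 z]
        by (metis mult.right_neutral mult_left_mono)
    qed
    also have "\<dots> \<le> (\<Sum>z\<in>St. W s0 z * exp (- l1 * (Lam z + E)))"
      using LoSt finSt Wpos by (intro sum_mono2) auto
    also have "\<dots> = exp (- (l1 * E)) * (\<Sum>z\<in>St. W s0 z * exp ((- l1) * Lam z))"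
      by (simp add: sum_distrib_left algebra_simps exp_add[symmetric])
    also have "\<dots> = exp (-(l1 * \<epsilon>)) ^ t * gfun Y P (s0 - l1) ^ t"
      unfolding Wshift Wsum expE by simp
    finally show ?thesis using True by (simp add: power_mult_distrib)
  qed
  have Up_bound: "(\<Sum>z\<in>Up. W s0 z) \<le> (if 0 < s0 then (exp (-(l2 * \<epsilon>)) * gfun Y P (s0 + l2)) ^ t else 0)"
  proof (cases "0 < s0")
    case False thus ?thesis unfolding Up_def by simp
  next
    case True
    have "(\<Sum>z\<in>Up. W s0 z) \<le> (\<Sum>z\<in>Up. W s0 z * exp (l2 * (Lam z - E)))"
    proof (intro sum_mono)
      fix z assume "z \<in> Up"
      hence "0 < Lam z - E" using True unfolding Up_def by auto
      hence "1 \<le> exp (l2 * (Lam z - E))" using l by simp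
      thus "W s0 z \<le> W s0 z * exp (l2 * (Lam z - E))" using Wpos[of s0 z]
        by (metis mult.right_neutral mult_left_mono)
    qed
    also have "\<dots> \<le> (\<Sum>z\<in>St. W s0 z * exp (l2 * (Lam z - E)))"
      using UpSt finSt Wpos by (intro sum_mono2) auto
    also have "\<dots> = exp (- (l2 * E)) * (\<Sum>z\<in>St. W s0 z * exp (l2 * Lam z))"
      by (simp add: sum_distrib_left algebra_simps exp_add[symmetric] exp_diff)
    also have "\<dots> = exp (-(l2 * \<epsilon>)) ^ t * gfun Y P (s0 + l2) ^ t"
      unfolding Wshift Wsum expE by simp
    finally show ?thesis using True by (simp add: power_mult_distrib)
  qed
  have Gmin: "exp (- E) * W s0 z \<le> min (power_exp P t 1 z) (power_exp P t 2 z)" if z: "z \<in> G" for z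
  proof -
    have zSt: "z \<in> St" using z unfolding G_def by auto
    have zS: "\<tau> < t \<Longrightarrow> z \<tau> \<in> S" for \<tau> using zSt unfolding St_def by (auto simp: PiE_iff)
    have pA: "power_exp P t 1 z = exp (LA z)"
      unfolding power_exp_def LA_def using zS Spos by (simp add: exp_sum)
    have pB: "power_exp P t 2 z = exp (LB z)"
      unfolding power_exp_def LB_def using zS Spos by (simp add: exp_sum)
    have c1: "s0 < 1 \<Longrightarrow> -E \<le> Lam z" using z unfolding G_def Lo_def by auto
    have c2: "0 < s0 \<Longrightarrow> Lam z \<le> E" using z unfolding G_def Up_def by auto
    note ta = tail_aux[OF s0 E0 c1 c2]
    have "- E + (s0 * LA z + (1 - s0) * LB z) \<le> LA z"
      using ta(1) unfolding Lam_def by (simp add: algebra_simps)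
    moreover have "- E + (s0 * LA z + (1 - s0) * LB z) \<le> LB z"
      using ta(2) unfolding Lam_def by (simp add: algebra_simps)
    ultimately show ?thesis unfolding pA pB W_def by (simp add: exp_add[symmetric])
  qed
  have "(\<Sum>z\<in>St. W s0 z) = (\<Sum>z\<in>G. W s0 z) + (\<Sum>z\<in>Lo \<union> Up. W s0 z)"
    unfolding G_def using LoSt UpSt finSt by (intro sum.subset_diff) auto
  moreover have "(\<Sum>z\<in>Lo \<union> Up. W s0 z) \<le> (\<Sum>z\<in>Lo. W s0 z) + (\<Sum>z\<in>Up. W s0 z)"
    using finLo finUp Wpos by (intro sum_Un_le_nonneg) auto
  ultimately have GW: "gfun Y P s0 ^ t
      - (if s0 < 1 then (exp (-(l1 * \<epsilon>)) * gfun Y P (s0 - l1)) ^ t else 0)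
      - (if 0 < s0 then (exp (-(l2 * \<epsilon>)) * gfun Y P (s0 + l2)) ^ t else 0) \<le> (\<Sum>z\<in>G. W s0 z)"
    using Lo_bound Up_bound Wsum[of s0] by linarith
  have "exp (-(\<epsilon> * real t)) * (gfun Y P s0 ^ t
      - (if s0 < 1 then (exp (-(l1 * \<epsilon>)) * gfun Y P (s0 - l1)) ^ t else 0)
      - (if 0 < s0 then (exp (-(l2 * \<epsilon>)) * gfun Y P (s0 + l2)) ^ t else 0))
      \<le> exp (- E) * (\<Sum>z\<in>G. W s0 z)"
    unfolding E_def by (intro mult_left_mono GW) auto
  also have "\<dots> = (\<Sum>z\<in>G. exp (- E) * W s0 z)" by (simp add: sum_distrib_left)
  also have "\<dots> \<le> (\<Sum>z\<in>G. min (power_exp P t 1 z) (power_exp P t 2 z))"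
    by (intro sum_mono Gmin)
  also have "\<dots> \<le> Mmix t Y P"
    unfolding Mmix_def
  proof (intro sum_mono2)
    show "finite (power_carrier t Y)" unfolding power_carrier_def using e(1) by (intro finite_PiE) auto
    show "G \<subseteq> power_carrier t Y" using StY unfolding G_def by auto
    fix z assume "z \<in> power_carrier t Y - G"
    hence "\<tau> < t \<Longrightarrow> z \<tau> \<in> Y" for \<tau> unfolding power_carrier_def by (auto simp: PiE_iff)
    thus "0 \<le> min (power_exp P t 1 z) (power_exp P t 2 z)"
      unfolding power_exp_def using e by (auto intro!: prod_nonneg)
  qed
  finally show ?thesis .
qed



definition gder :: "'y set \<Rightarrow> (nat \<Rightarrow> 'y \<Rightarrow> real) \<Rightarrow> real \<Rightarrow> real" where
  "gder Y P s = (\<Sum>y\<in>supp2 Y P. exp (s * ln (P 1 y) + (1 - s) * ln (P 2 y)) * (ln (P 1 y) - ln (P 2 y)))"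

lemma gfun_deriv: "(gfun Y P has_real_derivative gder Y P s) (at s)"
  unfolding gfun_def[abs_def] gder_def
  by (rule DERIV_sum) (auto intro!: derivative_eq_intros simp: algebra_simps)

lemma gfun_cont: "isCont (gfun Y P) s"
  using gfun_deriv by (rule DERIV_isCont)

lemma cf_eq_gfun:
  assumes ex: "is_experiment Theta Y P" and s: "0 < s" "s < 1"
  shows "cf Y P s = gfun Y P s"
proof -
  note e = exp_Theta[OF ex]
  show ?thesis
    unfolding cf_def gfun_def
  proof (rule sum.mono_neutral_cong_right)
    show "finite Y" by (rule e(1))
    show "supp2 Y P \<subseteq> Y" by (auto simp: supp2_def)
    show "\<forall>i\<in>Y - supp2 Y P. pw (P 1 i) s * pw (P 2 i) (1 - s) = 0"
    proof
      fix y assume y: "y \<in> Y - supp2 Y P"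
      hence "P 1 y = 0 \<or> P 2 y = 0" using e(2,3)[of y] by (auto simp: supp2_def)
      thus "pw (P 1 y) s * pw (P 2 y) (1 - s) = 0" using s by (auto simp: pw_def)
    qed
    fix y assume y: "y \<in> supp2 Y P"
    hence "0 < P 1 y" "0 < P 2 y" by (auto simp: supp2_def)
    thus "pw (P 1 y) s * pw (P 2 y) (1 - s) = exp (s * ln (P 1 y) + (1 - s) * ln (P 2 y))"
      using s by (simp add: pw_def powr_def exp_add mult.commute)
  qed
qed

lemma Mmix_lower:
  assumes ex: "is_experiment Theta Y P" and b: "0 \<le> b" "b < chernoff_coeff Y P"
  shows "eventually (\<lambda>t. b ^ t \<le> Mmix t Y P) sequentially"
proof -
  define \<rho> where "\<rho> = chernoff_coeff Y P"
  define g where "g = gfun Y P"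
  define g' where "g' = gder Y P"
  have gd: "(g has_real_derivative g' s) (at s)" for s unfolding g_def g'_def by (rule gfun_deriv)
  have gge: "\<rho> \<le> g s" if "0 < s" "s < 1" for s
    using chernoff_coeff_lower[OF ex, of s] cf_eq_gfun[OF ex that] that unfolding \<rho>_def g_def by auto
  have "continuous_on {0..1} g" unfolding g_def
    by (intro continuous_at_imp_continuous_on ballI gfun_cont)
  then obtain s0 where s0: "s0 \<in> {0..1}" "\<And>s. s \<in> {0..1} \<Longrightarrow> g s0 \<le> g s"
    using continuous_attains_inf[of "{0..1}" g] by auto
  have gs0: "\<rho> \<le> g s0"
  proof (rule ccontr)
    assume "\<not> \<rho> \<le> g s0"
    hence lt: "g s0 < \<rho>" by simp
    have "(g \<longlongrightarrow> g s0) (at s0)" using gfun_cont[where Y=Y and P=P and s=s0] unfolding g_def isCont_def .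
    hence "eventually (\<lambda>x. g x < \<rho>) (at s0)" using lt by (rule order_tendstoD)
    then obtain d where d: "d > 0" "\<And>x. x \<noteq> s0 \<Longrightarrow> dist x s0 < d \<Longrightarrow> g x < \<rho>"
      unfolding eventually_at by auto
    define x where "x = (if s0 \<le> 1/2 then s0 + min (d/2) (1/4) else s0 - min (d/2) (1/4))"
    have "x \<noteq> s0" "dist x s0 < d" "0 < x" "x < 1"
      using d(1) s0(1) unfolding x_def dist_real_def by (auto split: if_splits simp: min_def)
    thus False using d(2) gge by fastforce
  qed
  have gpos: "0 < g s0" using gs0 b unfolding \<rho>_def by linarith
  have d1: "0 \<le> g' s0" if "s0 < 1"
  proof (rule ccontr)
    assume "\<not> 0 \<le> g' s0"
    then obtain e where e: "e > 0" "\<And>h. 0 < h \<Longrightarrow> h < e \<Longrightarrow> g (s0 + h) < g s0"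
      using DERIV_neg_dec_right[OF gd[of s0]] by force
    define h where "h = min (e/2) (1 - s0)"
    have "0 < h" "h < e" "s0 + h \<in> {0..1}" using e(1) that s0(1) unfolding h_def by auto
    thus False using e(2) s0(2) by fastforce
  qed
  have d2: "g' s0 \<le> 0" if "0 < s0"
  proof (rule ccontr)
    assume "\<not> g' s0 \<le> 0"
    then obtain e where e: "e > 0" "\<And>h. 0 < h \<Longrightarrow> h < e \<Longrightarrow> g (s0 - h) < g s0"
      using DERIV_pos_inc_left[OF gd[of s0]] by force
    define h where "h = min (e/2) s0"
    have "0 < h" "h < e" "s0 - h \<in> {0..1}" using e(1) that s0(1) unfolding h_def by auto
    thus False using e(2) s0(2) by fastforce
  qed
  define c where "c = (g s0 + b) / 2"
  have c: "b < c" "c < g s0" "0 < c" using gs0 b gpos unfolding c_def \<rho>_def by auto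
  define \<epsilon> where "\<epsilon> = ln (g s0 / c)"
  have eps: "0 < \<epsilon>" unfolding \<epsilon>_def using c by simp
  have expeps: "exp (- \<epsilon>) = c / g s0" unfolding \<epsilon>_def using c gpos by (simp add: exp_minus)
  define k1f where "k1f l = exp (-(l * \<epsilon>)) * g (s0 - l)" for l
  define k2f where "k2f l = exp (-(l * \<epsilon>)) * g (s0 + l)" for l
  have k1d: "(k1f has_real_derivative (- \<epsilon> * g s0 - g' s0)) (at 0)"
  proof -
    have "((\<lambda>l. g (s0 - l)) has_real_derivative g' (s0 - 0) * (- 1)) (at 0)"
      by (rule DERIV_chain2[OF gd]) (auto intro!: derivative_eq_intros)
    moreover have "((\<lambda>l. exp (-(l * \<epsilon>))) has_real_derivative (- \<epsilon>)) (at 0)"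
      by (auto intro!: derivative_eq_intros)
    ultimately have "((\<lambda>l. exp (-(l * \<epsilon>)) * g (s0 - l)) has_real_derivative
        (- \<epsilon>) * g (s0 - 0) + (g' (s0 - 0) * (- 1)) * exp (-(0 * \<epsilon>))) (at 0)"
      by (intro DERIV_mult) auto
    thus ?thesis unfolding k1f_def by simp
  qed
  have k2d: "(k2f has_real_derivative (- \<epsilon> * g s0 + g' s0)) (at 0)"
  proof -
    have "((\<lambda>l. g (s0 + l)) has_real_derivative g' (s0 + 0) * 1) (at 0)"
      by (rule DERIV_chain2[OF gd]) (auto intro!: derivative_eq_intros)
    moreover have "((\<lambda>l. exp (-(l * \<epsilon>))) has_real_derivative (- \<epsilon>)) (at 0)"
      by (auto intro!: derivative_eq_intros)
    ultimately have "((\<lambda>l. exp (-(l * \<epsilon>)) * g (s0 + l)) has_real_derivative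
        (- \<epsilon>) * g (s0 + 0) + (g' (s0 + 0) * 1) * exp (-(0 * \<epsilon>))) (at 0)"
      by (intro DERIV_mult) auto
    thus ?thesis unfolding k2f_def by simp
  qed
  obtain l1 where l1: "0 < l1" "s0 < 1 \<Longrightarrow> k1f l1 < g s0"
  proof (cases "s0 < 1")
    case True
    have "- \<epsilon> * g s0 - g' s0 < 0" using d1[OF True] mult_pos_pos[OF eps gpos] by linarith
    then obtain h where "h > 0" "k1f (0 + h) < k1f 0" using ex_dec_right[OF k1d] by blast
    thus ?thesis using that unfolding k1f_def by auto
  next
    case False thus ?thesis using that[of 1] by auto
  qed
  obtain l2 where l2: "0 < l2" "0 < s0 \<Longrightarrow> k2f l2 < g s0"
  proof (cases "0 < s0")
    case True
    have "- \<epsilon> * g s0 + g' s0 < 0" using d2[OF True] mult_pos_pos[OF eps gpos] by linarith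
    then obtain h where "h > 0" "k2f (0 + h) < k2f 0" using ex_dec_right[OF k2d] by blast
    thus ?thesis using that unfolding k2f_def by auto
  next
    case False thus ?thesis using that[of 1] by auto
  qed
  define k1 where "k1 = (if s0 < 1 then k1f l1 else 0)"
  define k2 where "k2 = (if 0 < s0 then k2f l2 else 0)"
  have k1: "0 \<le> k1" "k1 < g s0" using l1 gpos unfolding k1_def k1f_def g_def by (auto intro!: gfun_nonneg mult_nonneg_nonneg)
  have k2: "0 \<le> k2" "k2 < g s0" using l2 gpos unfolding k2_def k2f_def g_def by (auto intro!: gfun_nonneg mult_nonneg_nonneg)
  have main: "exp (-(\<epsilon> * real t)) * (g s0 ^ t - k1 ^ t - k2 ^ t) \<le> Mmix t Y P" for t
  proof -
    have "exp (-(\<epsilon> * real t)) * (g s0 ^ t - k1 ^ t - k2 ^ t) \<le>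
      exp (-(\<epsilon> * real t)) * (gfun Y P s0 ^ t
      - (if s0 < 1 then (exp (-(l1 * \<epsilon>)) * gfun Y P (s0 - l1)) ^ t else 0)
      - (if 0 < s0 then (exp (-(l2 * \<epsilon>)) * gfun Y P (s0 + l2)) ^ t else 0))"
      unfolding k1_def k2_def k1f_def k2f_def g_def
      by (intro mult_left_mono) (auto)
    also have "\<dots> \<le> Mmix t Y P"
      using s0(1) eps l1(1) l2(1) by (intro comb_bound[OF ex]) auto
    finally show ?thesis .
  qed
  have ev1: "eventually (\<lambda>t. (k1 / g s0) ^ t < 1/4) sequentially"
    using k1 gpos by (intro order_tendstoD(2)[OF LIMSEQ_realpow_zero]) auto
  have ev2: "eventually (\<lambda>t. (k2 / g s0) ^ t < 1/4) sequentially"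
    using k2 gpos by (intro order_tendstoD(2)[OF LIMSEQ_realpow_zero]) auto
  have ev3: "eventually (\<lambda>t. (b / c) ^ t < 1/2) sequentially"
    using b c by (intro order_tendstoD(2)[OF LIMSEQ_realpow_zero]) auto
  show ?thesis
  proof (rule eventually_mono[OF eventually_conj[OF ev1 eventually_conj[OF ev2 ev3]]])
    fix t assume h: "(k1 / g s0) ^ t < 1/4 \<and> (k2 / g s0) ^ t < 1/4 \<and> (b / c) ^ t < 1/2"
    have eq: "exp (-(\<epsilon> * real t)) * (g s0 ^ t - k1 ^ t - k2 ^ t)
        = c ^ t * (1 - (k1 / g s0) ^ t - (k2 / g s0) ^ t)"
    proof -
      have "exp (-(\<epsilon> * real t)) = exp (real t * (- \<epsilon>))" by (simp add: mult.commute)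
      also have "\<dots> = exp (- \<epsilon>) ^ t" by (rule exp_of_nat_mult)
      also have "\<dots> = (c / g s0) ^ t" by (simp only: expeps)
      finally have X: "exp (-(\<epsilon> * real t)) = (c / g s0) ^ t" .
      have Y1: "(c / g s0) ^ t * g s0 ^ t = c ^ t"
      proof -
        have "(c / g s0) ^ t * g s0 ^ t = (c / g s0 * g s0) ^ t" by (rule power_mult_distrib[symmetric])
        also have "c / g s0 * g s0 = c" using gpos by simp
        finally show ?thesis .
      qed
      have Y2: "(c / g s0) ^ t * k ^ t = c ^ t * (k / g s0) ^ t" for k
      proof -
        have "(c / g s0) ^ t * k ^ t = (c / g s0 * k) ^ t" by (rule power_mult_distrib[symmetric])
        also have "c / g s0 * k = c * (k / g s0)" by simp
        finally show ?thesis by (simp only: power_mult_distrib)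
      qed
      have gg: "g s0 / g s0 = 1" using gpos by simp
      show ?thesis unfolding X right_diff_distrib Y2 by (simp only: gg power_one mult.right_neutral)
    qed
    have cb: "c * (b / c) = b" using c by simp
    have "b ^ t = (c * (b / c)) ^ t" by (simp only: cb)
    also have "\<dots> = c ^ t * (b / c) ^ t" by (rule power_mult_distrib)
    also have "\<dots> \<le> c ^ t * (1/2)"
    proof -
      have hb: "(b / c) ^ t \<le> 1/2" using h by linarith
      have c0: "0 \<le> c ^ t" using c by simp
      show ?thesis using mult_left_mono[OF hb c0] .
    qed
    also have "\<dots> \<le> c ^ t * (1 - (k1 / g s0) ^ t - (k2 / g s0) ^ t)"
    proof -
      have hb: "1/2 \<le> 1 - (k1 / g s0) ^ t - (k2 / g s0) ^ t" using h by linarith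
      have c0: "0 \<le> c ^ t" using c by simp
      show ?thesis using mult_left_mono[OF hb c0] .
    qed
    also have "\<dots> \<le> Mmix t Y P" using main[of t] unfolding eq .
    finally show "b ^ t \<le> Mmix t Y P" .
  qed
qed



lemma chernoff_less_coeff:
  assumes ex1: "is_experiment Theta Y1 P1" and exi: "is_experiment Theta Yi Qi"
    and lt: "chernoff Yi Qi < chernoff Y1 P1"
  shows "chernoff_coeff Y1 P1 < chernoff_coeff Yi Qi" "0 < chernoff_coeff Yi Qi"
proof -
  have n1: "0 \<le> chernoff_coeff Y1 P1" by (rule chernoff_coeff_nonneg[OF ex1])
  have ni: "0 \<le> chernoff_coeff Yi Qi" by (rule chernoff_coeff_nonneg[OF exi])
  show pi: "0 < chernoff_coeff Yi Qi"
  proof (rule ccontr)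
    assume "\<not> 0 < chernoff_coeff Yi Qi"
    hence "chernoff Yi Qi = \<infinity>" using ni unfolding chernoff_def by auto
    thus False using lt by simp
  qed
  show "chernoff_coeff Y1 P1 < chernoff_coeff Yi Qi"
  proof (cases "chernoff_coeff Y1 P1 = 0")
    case True thus ?thesis using pi by simp
  next
    case False
    hence "- ln (chernoff_coeff Yi Qi) < - ln (chernoff_coeff Y1 P1)"
      using lt pi unfolding chernoff_def by auto
    hence "ln (chernoff_coeff Y1 P1) < ln (chernoff_coeff Yi Qi)" by simp
    thus ?thesis using False n1 pi by simp
  qed
qed

lemma asym:
  assumes ex1: "is_experiment Theta Y1 P1" and exi: "is_experiment Theta Yi Qi"
    and lt: "chernoff Yi Qi < chernoff Y1 P1"
  shows "eventually (\<lambda>t. K * Mmix t Y1 P1 \<le> Mmix t Yi Qi \<and> 0 < Mmix t Yi Qi) sequentially"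
proof -
  define r1 where "r1 = chernoff_coeff Y1 P1"
  define ri where "ri = chernoff_coeff Yi Qi"
  have r: "r1 < ri" "0 < ri" "0 \<le> r1"
    using chernoff_less_coeff[OF ex1 exi lt] chernoff_coeff_nonneg[OF ex1] unfolding r1_def ri_def by auto
  define b1 where "b1 = r1 + (ri - r1) / 3"
  define b2 where "b2 = ri - (ri - r1) / 3"
  have b: "0 \<le> b1" "b1 < b2" "0 < b2" "b2 < ri" "r1 < b1" using r unfolding b1_def b2_def by (auto simp: field_simps)
  obtain s where s: "s \<in> {0..1}" "cf Y1 P1 s < b1"
    using chernoff_coeff_less[OF ex1, of b1] b unfolding r1_def by auto
  have up: "Mmix t Y1 P1 \<le> b1 ^ t" for t
  proof -
    have "Mmix t Y1 P1 \<le> cf Y1 P1 s ^ t" by (rule Mmix_upper[OF ex1 s(1)])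
    also have "\<dots> \<le> b1 ^ t" using s(2) cf_nonneg[OF ex1, of s] by (intro power_mono) auto
    finally show ?thesis .
  qed
  have ev1: "eventually (\<lambda>t. b2 ^ t \<le> Mmix t Yi Qi) sequentially"
    using b by (intro Mmix_lower[OF exi]) (auto simp: ri_def)
  have ev2: "eventually (\<lambda>t. \<bar>K\<bar> * (b1 / b2) ^ t < 1) sequentially"
  proof -
    have "(\<lambda>t. \<bar>K\<bar> * (b1 / b2) ^ t) \<longlonglongrightarrow> \<bar>K\<bar> * 0"
      using b by (intro tendsto_mult tendsto_const LIMSEQ_realpow_zero) auto
    thus ?thesis by (rule order_tendstoD(2)) simp
  qed
  show ?thesis
  proof (rule eventually_mono[OF eventually_conj[OF ev1 ev2]])
    fix t assume h: "b2 ^ t \<le> Mmix t Yi Qi \<and> \<bar>K\<bar> * (b1 / b2) ^ t < 1"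
    have b2t: "0 < b2 ^ t" using b by simp
    have "K * Mmix t Y1 P1 \<le> \<bar>K\<bar> * Mmix t Y1 P1"
    proof -
      have "0 \<le> Mmix t Y1 P1" unfolding Mmix_def power_carrier_def power_exp_def
        using exp_Theta[OF ex1] by (intro sum_nonneg) (auto intro!: prod_nonneg simp: PiE_iff)
      thus ?thesis by (metis abs_ge_self mult_right_mono)
    qed
    also have "\<dots> \<le> \<bar>K\<bar> * b1 ^ t" by (intro mult_left_mono up) auto
    also have "\<bar>K\<bar> * b1 ^ t = (\<bar>K\<bar> * (b1 / b2) ^ t) * b2 ^ t"
      using b by (simp add: power_divide)
    also have "\<dots> \<le> 1 * b2 ^ t" using h b2t by (intro mult_right_mono) auto
    also have "\<dots> \<le> Mmix t Yi Qi" using h by simp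
    finally show "K * Mmix t Y1 P1 \<le> Mmix t Yi Qi \<and> 0 < Mmix t Yi Qi" using h b2t by auto
  qed
qed



lemma Theta_sum: "(\<Sum>\<theta>\<in>Theta. f \<theta>) = f 1 + f 2"
  by (simp add: Theta_def)

lemma PiE_prod_marg:
  fixes h :: "nat \<Rightarrow> 'z \<Rightarrow> real"
  assumes "finite I" "\<And>i. i \<in> I \<Longrightarrow> finite (Z i)" "j \<in> I" "zj \<in> Z j"
  shows "(\<Sum>z\<in>{z\<in>PiE I Z. z j = zj}. \<Prod>i\<in>I. h i (z i))
       = h j zj * (\<Prod>i\<in>I - {j}. \<Sum>y\<in>Z i. h i y)"
proof -
  define h' where "h' i y = (if i = j then (if y = zj then h i y else 0) else h i y)" for i y
  have finP: "finite (PiE I Z)" using assms by (intro finite_PiE) auto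
  have "(\<Sum>z\<in>{z\<in>PiE I Z. z j = zj}. \<Prod>i\<in>I. h i (z i))
      = (\<Sum>z\<in>PiE I Z. if z j = zj then \<Prod>i\<in>I. h i (z i) else 0)"
    using finP by (rule sum.inter_filter)
  also have "\<dots> = (\<Sum>z\<in>PiE I Z. \<Prod>i\<in>I. h' i (z i))"
  proof (intro sum.cong refl)
    fix z assume "z \<in> PiE I Z"
    show "(if z j = zj then \<Prod>i\<in>I. h i (z i) else 0) = (\<Prod>i\<in>I. h' i (z i))"
    proof (cases "z j = zj")
      case True
      have "(\<Prod>i\<in>I. h' i (z i)) = (\<Prod>i\<in>I. h i (z i))"
        unfolding h'_def using True by (intro prod.cong) auto
      thus ?thesis using True by simp
    next
      case False
      have "(\<Prod>i\<in>I. h' i (z i)) = h' j (z j) * (\<Prod>i\<in>I - {j}. h' i (z i))"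
        using assms by (intro prod.remove)
      thus ?thesis using False unfolding h'_def by simp
    qed
  qed
  also have "\<dots> = (\<Prod>i\<in>I. \<Sum>y\<in>Z i. h' i y)"
    using prod_sum_PiE[of I Z h'] assms by simp
  also have "\<dots> = (\<Sum>y\<in>Z j. h' j y) * (\<Prod>i\<in>I - {j}. \<Sum>y\<in>Z i. h' i y)"
    using assms by (intro prod.remove)
  also have "(\<Prod>i\<in>I - {j}. \<Sum>y\<in>Z i. h' i y) = (\<Prod>i\<in>I - {j}. \<Sum>y\<in>Z i. h i y)"
    unfolding h'_def by (intro prod.cong) auto
  also have "(\<Sum>y\<in>Z j. h' j y) = (if zj \<in> Z j then h j zj else 0)"
    unfolding h'_def using assms by (simp add: sum.delta)
  finally show ?thesis
    using assms(4) by simp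
qed



lemma payoff_bound:
  assumes "finite Z'" "finite A" "\<forall>\<theta>\<in>Theta. is_dist Z' (R \<theta>)" "\<sigma> \<in> strategies Z' A"
  shows "\<bar>payoff Theta Z' R A u \<sigma>\<bar> \<le> (\<Sum>\<theta>\<in>Theta. \<Sum>a\<in>A. \<bar>u \<theta> a\<bar>)"
proof -
  have s: "\<And>z. z \<in> Z' \<Longrightarrow> (\<forall>a\<in>A. 0 \<le> \<sigma> z a) \<and> sum (\<sigma> z) A = 1"
    using assms(4) unfolding strategies_def is_dist_def by auto
  have inner: "\<bar>\<Sum>a\<in>A. \<sigma> z a * u \<theta> a\<bar> \<le> (\<Sum>a\<in>A. \<bar>u \<theta> a\<bar>)" if z: "z \<in> Z'" for z \<theta>
  proof -
    have "\<bar>\<Sum>a\<in>A. \<sigma> z a * u \<theta> a\<bar> \<le> (\<Sum>a\<in>A. \<bar>\<sigma> z a * u \<theta> a\<bar>)" by (rule sum_abs)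
    also have "\<dots> \<le> (\<Sum>a\<in>A. \<bar>u \<theta> a\<bar>)"
    proof (intro sum_mono)
      fix a assume a: "a \<in> A"
      have "\<sigma> z a \<le> sum (\<sigma> z) A" using s[OF z] a assms(2) by (intro member_le_sum) auto
      hence "\<sigma> z a \<le> 1" using s[OF z] by simp
      thus "\<bar>\<sigma> z a * u \<theta> a\<bar> \<le> \<bar>u \<theta> a\<bar>" using s[OF z] a
        by (simp add: abs_mult mult_left_le_one_le)
    qed
    finally show ?thesis .
  qed
  have "\<bar>payoff Theta Z' R A u \<sigma>\<bar> \<le> (\<Sum>\<theta>\<in>Theta. \<Sum>z\<in>Z'. \<bar>R \<theta> z * (\<Sum>a\<in>A. \<sigma> z a * u \<theta> a)\<bar>)"
    unfolding payoff_def by (rule order.trans[OF sum_abs sum_mono[OF sum_abs]])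
  also have "\<dots> \<le> (\<Sum>\<theta>\<in>Theta. \<Sum>z\<in>Z'. R \<theta> z * (\<Sum>a\<in>A. \<bar>u \<theta> a\<bar>))"
  proof (intro sum_mono)
    fix \<theta> z assume th: "\<theta> \<in> Theta" and z: "z \<in> Z'"
    have R0: "0 \<le> R \<theta> z" using assms(3) th z unfolding is_dist_def by auto
    show "\<bar>R \<theta> z * (\<Sum>a\<in>A. \<sigma> z a * u \<theta> a)\<bar> \<le> R \<theta> z * (\<Sum>a\<in>A. \<bar>u \<theta> a\<bar>)"
      using inner[OF z, of \<theta>] R0 by (simp add: abs_mult mult_left_mono)
  qed
  also have "\<dots> = (\<Sum>\<theta>\<in>Theta. \<Sum>a\<in>A. \<bar>u \<theta> a\<bar>)"
  proof (intro sum.cong refl)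
    fix \<theta> assume "\<theta> \<in> Theta"
    hence "sum (R \<theta>) Z' = 1" using assms(3) unfolding is_dist_def by auto
    thus "(\<Sum>z\<in>Z'. R \<theta> z * (\<Sum>a\<in>A. \<bar>u \<theta> a\<bar>)) = (\<Sum>a\<in>A. \<bar>u \<theta> a\<bar>)"
      by (simp add: sum_distrib_right[symmetric])
  qed
  finally show ?thesis .
qed

lemma coupling_z1:
  assumes R: "R \<in> couplings Theta I Z Q" and fin: "finite I" "\<And>i. i \<in> I \<Longrightarrow> finite (Z i)" and one: "1 \<in> I"
    and th: "\<theta> \<in> Theta"
  shows "(\<Sum>z\<in>PiE I Z. R \<theta> z * f (z 1)) = (\<Sum>y\<in>Z 1. Q 1 \<theta> y * f y)"
proof -
  have finP: "finite (PiE I Z)" using fin by (intro finite_PiE) auto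
  have "(\<Sum>z\<in>PiE I Z. R \<theta> z * f (z 1)) = (\<Sum>y\<in>Z 1. \<Sum>z\<in>{z\<in>PiE I Z. z 1 = y}. R \<theta> z * f (z 1))"
    using finP fin one by (intro sum.group[symmetric]) (auto simp: PiE_iff)
  also have "\<dots> = (\<Sum>y\<in>Z 1. (\<Sum>z\<in>{z\<in>PiE I Z. z 1 = y}. R \<theta> z) * f y)"
    by (intro sum.cong refl) (auto simp: sum_distrib_right)
  also have "\<dots> = (\<Sum>y\<in>Z 1. Q 1 \<theta> y * f y)"
    using R th one unfolding couplings_def by (intro sum.cong refl) auto
  finally show ?thesis .
qed

lemma payoff_lift:
  assumes R: "R \<in> couplings Theta I Z Q" and fin: "finite I" "\<And>i. i \<in> I \<Longrightarrow> finite (Z i)" and one: "1 \<in> I"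
  shows "payoff Theta (PiE I Z) R A u (\<lambda>z. \<sigma> (z 1)) = payoff Theta (Z 1) (Q 1) A u \<sigma>"
  unfolding payoff_def
  by (intro sum.cong refl coupling_z1[OF R fin one, where f = "\<lambda>y. \<Sum>a\<in>A. \<sigma> y a * u _ a"]) auto

lemma strategies_ne:
  assumes "a0 \<in> A" "finite A"
  shows "(\<lambda>z a. if a = a0 then 1 else 0) \<in> strategies Z' A"
  using assms unfolding strategies_def is_dist_def by (auto simp: sum.delta)

lemma V_ge:
  assumes fin: "finite I" "\<And>i. i \<in> I \<Longrightarrow> finite (Z i)" and one: "1 \<in> I"
    and A: "finite A" "A \<noteq> {}" and R0: "R0 \<in> couplings Theta I Z Q"
    and Q1: "\<forall>\<theta>\<in>Theta. is_dist (Z 1) (Q 1 \<theta>)"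
  shows "V_single Theta (Z 1) (Q 1) A u \<le> V_multi Theta I Z Q A u"
proof -
  define B where "B = (\<Sum>\<theta>\<in>Theta. \<Sum>a\<in>A. \<bar>u \<theta> a\<bar>)"
  have finP: "finite (PiE I Z)" using fin by (intro finite_PiE) auto
  have finZ1: "finite (Z 1)" using fin one by auto
  obtain a0 where a0: "a0 \<in> A" using A by auto
  have Rd: "\<forall>\<theta>\<in>Theta. is_dist (PiE I Z) (R \<theta>)" if "R \<in> couplings Theta I Z Q" for R
    using that unfolding couplings_def by auto
  have pb: "\<bar>payoff Theta (PiE I Z) R A u \<sigma>\<bar> \<le> B"
    if "R \<in> couplings Theta I Z Q" "\<sigma> \<in> strategies (PiE I Z) A" for R \<sigma>
    unfolding B_def by (rule payoff_bound[OF finP A(1) Rd[OF that(1)] that(2)])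
  have bddb: "bdd_below ((\<lambda>R. payoff Theta (PiE I Z) R A u \<sigma>) ` couplings Theta I Z Q)"
    if "\<sigma> \<in> strategies (PiE I Z) A" for \<sigma>
    using pb[OF _ that] by (intro bdd_belowI[where m="-B"]) force
  have bdda: "bdd_above ((\<lambda>\<sigma>. INF R\<in>couplings Theta I Z Q. payoff Theta (PiE I Z) R A u \<sigma>) ` strategies (PiE I Z) A)"
  proof (intro bdd_aboveI[where M=B])
    fix x assume "x \<in> (\<lambda>\<sigma>. INF R\<in>couplings Theta I Z Q. payoff Theta (PiE I Z) R A u \<sigma>) ` strategies (PiE I Z) A"
    then obtain \<sigma> where \<sigma>: "\<sigma> \<in> strategies (PiE I Z) A"
      and x: "x = (INF R\<in>couplings Theta I Z Q. payoff Theta (PiE I Z) R A u \<sigma>)" by auto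
    have "x \<le> payoff Theta (PiE I Z) R0 A u \<sigma>" unfolding x by (rule cINF_lower[OF bddb[OF \<sigma>] R0])
    also have "\<dots> \<le> B" using pb[OF R0 \<sigma>] by simp
    finally show "x \<le> B" .
  qed
  show ?thesis
    unfolding V_single_def
  proof (rule cSUP_least)
    show "strategies (Z 1) A \<noteq> {}" using strategies_ne[OF a0 A(1)] by blast
    fix \<sigma> assume \<sigma>: "\<sigma> \<in> strategies (Z 1) A"
    define \<sigma>' where "\<sigma>' = (\<lambda>z::nat\<Rightarrow>_. \<sigma> (z 1))"
    have \<sigma>': "\<sigma>' \<in> strategies (PiE I Z) A"
      using \<sigma> one unfolding strategies_def \<sigma>'_def by (auto simp: PiE_iff)
    have "payoff Theta (Z 1) (Q 1) A u \<sigma> = (INF R\<in>couplings Theta I Z Q. payoff Theta (PiE I Z) R A u \<sigma>')"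
    proof -
      have "(INF R\<in>couplings Theta I Z Q. payoff Theta (PiE I Z) R A u \<sigma>')
          = (INF R\<in>couplings Theta I Z Q. payoff Theta (Z 1) (Q 1) A u \<sigma>)"
        unfolding \<sigma>'_def by (intro INF_cong refl payoff_lift[OF _ fin one]) auto
      also have "\<dots> = payoff Theta (Z 1) (Q 1) A u \<sigma>" using R0 by (intro cINF_const) auto
      finally show ?thesis by simp
    qed
    also have "\<dots> \<le> V_multi Theta I Z Q A u"
      unfolding V_multi_def by (rule cSUP_upper[OF \<sigma>' bdda])
    finally show "payoff Theta (Z 1) (Q 1) A u \<sigma> \<le> V_multi Theta I Z Q A u" .
  qed
qed

lemma V_le:
  assumes fin: "finite I" "\<And>i. i \<in> I \<Longrightarrow> finite (Z i)" and one: "1 \<in> I"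
    and A: "finite A" "A \<noteq> {}" and R: "R \<in> couplings Theta I Z Q"
    and Q1: "\<forall>\<theta>\<in>Theta. is_dist (Z 1) (Q 1 \<theta>)"
    and act: "\<And>y. y \<in> Z 1 \<Longrightarrow> act y \<in> A"
    and pay: "\<And>\<sigma>. \<sigma> \<in> strategies (PiE I Z) A \<Longrightarrow>
       payoff Theta (PiE I Z) R A u \<sigma> \<le> payoff Theta (Z 1) (Q 1) A u (\<lambda>y a. if a = act y then 1 else 0)"
  shows "V_multi Theta I Z Q A u \<le> V_single Theta (Z 1) (Q 1) A u"
proof -
  define B where "B = (\<Sum>\<theta>\<in>Theta. \<Sum>a\<in>A. \<bar>u \<theta> a\<bar>)"
  have finP: "finite (PiE I Z)" using fin by (intro finite_PiE) auto
  have finZ1: "finite (Z 1)" using fin one by auto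
  obtain a0 where a0: "a0 \<in> A" using A by auto
  have Rd: "\<forall>\<theta>\<in>Theta. is_dist (PiE I Z) (R \<theta>)" if "R \<in> couplings Theta I Z Q" for R
    using that unfolding couplings_def by auto
  have bddb: "bdd_below ((\<lambda>R. payoff Theta (PiE I Z) R A u \<sigma>) ` couplings Theta I Z Q)"
    if "\<sigma> \<in> strategies (PiE I Z) A" for \<sigma>
    using payoff_bound[OF finP A(1) Rd that, where u=u] by (intro bdd_belowI[where m="-B"]) (force simp: B_def)
  have bdda: "bdd_above ((\<lambda>\<sigma>. payoff Theta (Z 1) (Q 1) A u \<sigma>) ` strategies (Z 1) A)"
    using payoff_bound[OF finZ1 A(1) Q1, where u=u] by (intro bdd_aboveI[where M=B]) (force simp: B_def)
  have s0: "(\<lambda>y a. if a = act y then 1 else 0) \<in> strategies (Z 1) A"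
    using act A(1) unfolding strategies_def is_dist_def by (auto simp: sum.delta)
  show ?thesis
    unfolding V_multi_def
  proof (rule cSUP_least)
    show "strategies (PiE I Z) A \<noteq> {}" using strategies_ne[OF a0 A(1)] by blast
    fix \<sigma> assume \<sigma>: "\<sigma> \<in> strategies (PiE I Z) A"
    have "(INF R\<in>couplings Theta I Z Q. payoff Theta (PiE I Z) R A u \<sigma>) \<le> payoff Theta (PiE I Z) R A u \<sigma>"
      by (rule cINF_lower[OF bddb[OF \<sigma>] R])
    also have "\<dots> \<le> payoff Theta (Z 1) (Q 1) A u (\<lambda>y a. if a = act y then 1 else 0)" by (rule pay[OF \<sigma>])
    also have "\<dots> \<le> V_single Theta (Z 1) (Q 1) A u"
      unfolding V_single_def by (rule cSUP_upper[OF s0 bdda])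
    finally show "(INF R\<in>couplings Theta I Z Q. payoff Theta (PiE I Z) R A u \<sigma>) \<le> V_single Theta (Z 1) (Q 1) A u" .
  qed
qed



lemma exists_extreme:
  fixes f g :: "'a \<Rightarrow> real"
  assumes "finite A" "A \<noteq> {}"
  shows "\<exists>a\<in>A. \<exists>r>0. \<forall>b\<in>A. f b \<le> f a \<and> r * f b + g b \<le> r * f a + g a"
proof -
  define A1 where "A1 = {a\<in>A. f a = Max (f ` A)}"
  have "Max (f ` A) \<in> f ` A" using assms by auto
  hence A1ne: "A1 \<noteq> {}" unfolding A1_def by auto
  have finA1: "finite A1" using assms unfolding A1_def by auto
  have "Max (g ` A1) \<in> g ` A1" using A1ne finA1 by auto
  then obtain a where a: "a \<in> A1" "g a = Max (g ` A1)" by auto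
  have aA: "a \<in> A" using a unfolding A1_def by auto
  have fmax: "f b \<le> f a" if "b \<in> A" for b using that a assms unfolding A1_def by auto
  have gmax: "g b \<le> g a" if "b \<in> A1" for b using that a finA1 by auto
  define D where "D = A - A1"
  define r where "r = 1 + (\<Sum>b\<in>D. \<bar>(g b - g a) / (f a - f b)\<bar>)"
  have rpos: "0 < r" unfolding r_def by (smt (verit) sum_nonneg abs_ge_zero)
  show ?thesis
  proof (intro bexI[OF _ aA] exI[of _ r] conjI rpos ballI)
    fix b assume b: "b \<in> A"
    show "f b \<le> f a" using fmax[OF b] .
    show "r * f b + g b \<le> r * f a + g a"
    proof (cases "b \<in> A1")
      case True
      hence "f b = f a" using a unfolding A1_def by auto
      thus ?thesis using gmax[OF True] by simp
    next
      case False
      hence fb: "f b < f a" using fmax[OF b] b a unfolding A1_def by auto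
      have bD: "b \<in> D" using b False unfolding D_def by auto
      have "\<bar>(g b - g a) / (f a - f b)\<bar> \<le> (\<Sum>b\<in>D. \<bar>(g b - g a) / (f a - f b)\<bar>)"
        using bD assms(1) unfolding D_def by (intro member_le_sum) auto
      hence "(g b - g a) / (f a - f b) \<le> r" unfolding r_def by linarith
      hence "g b - g a \<le> r * (f a - f b)" using fb by (simp add: divide_le_eq)
      thus ?thesis by (simp add: algebra_simps)
    qed
  qed
qed

lemma Fbound:
  fixes x1 x2 rh rl K :: real
  assumes x: "0 \<le> x1" "0 \<le> x2" and r: "0 < rh" "0 < rl" and K: "K = 1 + rh + 1/rh + rl + 1/rl"
  shows "rh * x2 \<le> x1 \<Longrightarrow> rh * x2 \<le> K * min x1 x2 \<and> x2 \<le> K * min x1 x2"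
    and "x1 \<le> rl * x2 \<Longrightarrow> x1 \<le> K * min x1 x2 \<and> x1 / rl \<le> K * min x1 x2"
    and "rl * x2 < x1 \<Longrightarrow> x1 < rh * x2 \<Longrightarrow> x1 \<le> K * min x1 x2 \<and> x2 \<le> K * min x1 x2"
proof -
  have K1: "1 \<le> K" "rh \<le> K" "1/rh \<le> K" "rl \<le> K" "1/rl \<le> K"
    using r unfolding K by (auto simp: add_pos_pos)
  have m1: "c * y \<le> K * y" if "c \<le> K" "0 \<le> y" for c y using that by (simp add: mult_right_mono)
  show "rh * x2 \<le> K * min x1 x2 \<and> x2 \<le> K * min x1 x2" if h: "rh * x2 \<le> x1"
  proof (cases "x1 \<le> x2")
    case True
    have "x2 \<le> x1 / rh" using h r by (simp add: field_simps)
    also have "\<dots> = (1/rh) * x1" by simp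
    also have "\<dots> \<le> K * x1" using m1[OF K1(3) x(1)] .
    finally have "x2 \<le> K * x1" .
    moreover have "rh * x2 \<le> K * x1" using h m1[OF K1(1) x(1)] by simp
    ultimately show ?thesis using True by simp
  next
    case False
    thus ?thesis using m1[OF K1(2) x(2)] m1[OF K1(1) x(2)] by simp
  qed
  show "x1 \<le> K * min x1 x2 \<and> x1 / rl \<le> K * min x1 x2" if h: "x1 \<le> rl * x2"
  proof (cases "x1 \<le> x2")
    case True
    thus ?thesis using m1[OF K1(1) x(1)] m1[OF K1(5) x(1)] by simp
  next
    case False
    have "x1 / rl \<le> x2" using h r by (simp add: field_simps)
    hence "x1 / rl \<le> K * x2" using m1[OF K1(1) x(2)] by simp
    moreover have "x1 \<le> K * x2" using h m1[OF K1(4) x(2)] by simp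
    ultimately show ?thesis using False by simp
  qed
  show "x1 \<le> K * min x1 x2 \<and> x2 \<le> K * min x1 x2" if h: "rl * x2 < x1" "x1 < rh * x2"
  proof (cases "x1 \<le> x2")
    case True
    have "x2 \<le> x1 / rl" using h r by (simp add: field_simps)
    also have "\<dots> = (1/rl) * x1" by simp
    also have "\<dots> \<le> K * x1" using m1[OF K1(5) x(1)] .
    finally show ?thesis using True m1[OF K1(1) x(1)] by simp
  next
    case False
    thus ?thesis using h m1[OF K1(2) x(2)] m1[OF K1(1) x(2)] by simp
  qed
qed



lemma argmax_ex:
  fixes f :: "'a \<Rightarrow> real"
  assumes "finite A" "A \<noteq> {}"
  shows "\<exists>a\<in>A. \<forall>b\<in>A. f b \<le> f a"
proof -
  have "Max (f ` A) \<in> f ` A" using assms by auto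
  then obtain a where "a \<in> A" "f a = Max (f ` A)" by auto
  thus ?thesis using assms by (intro bexI[of _ a]) auto
qed

lemma coupling_construct:
  fixes I :: "nat set" and Z :: "nat \<Rightarrow> 'z set" and Q :: "nat \<Rightarrow> nat \<Rightarrow> 'z \<Rightarrow> real"
    and A :: "'a set" and u :: "nat \<Rightarrow> 'a \<Rightarrow> real"
  assumes fin: "finite I" "\<And>i. i \<in> I \<Longrightarrow> finite (Z i)" and one: "1 \<in> I"
    and Qd: "\<And>i \<theta>. i \<in> I \<Longrightarrow> \<theta> \<in> Theta \<Longrightarrow> is_dist (Z i) (Q i \<theta>)"
    and A: "finite A" "A \<noteq> {}"
    and r: "0 < rh" "0 < rl"
    and a1: "a1 \<in> A" "\<And>b. b \<in> A \<Longrightarrow> u 1 b \<le> u 1 a1 \<and> rh * u 1 b + u 2 b \<le> rh * u 1 a1 + u 2 a1"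
    and a2: "a2 \<in> A" "\<And>b. b \<in> A \<Longrightarrow> u 2 b \<le> u 2 a2 \<and> rl * u 1 b + u 2 b \<le> rl * u 1 a2 + u 2 a2"
    and K: "K = 1 + rh + 1/rh + rl + 1/rl"
    and big: "\<And>i. i \<in> I - {1} \<Longrightarrow> K * (\<Sum>y\<in>Z 1. min (Q 1 1 y) (Q 1 2 y)) \<le> (\<Sum>y\<in>Z i. min (Q i 1 y) (Q i 2 y))
                 \<and> 0 < (\<Sum>y\<in>Z i. min (Q i 1 y) (Q i 2 y))"
  shows "\<exists>R\<in>couplings Theta I Z Q. \<exists>act. (\<forall>y\<in>Z 1. act y \<in> A) \<and>
     (\<forall>\<sigma>\<in>strategies (PiE I Z) A. payoff Theta (PiE I Z) R A u \<sigma>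
         \<le> payoff Theta (Z 1) (Q 1) A u (\<lambda>y a. if a = act y then 1 else 0))"
proof -
  have T: "1 \<in> Theta" "2 \<in> Theta" by (auto simp: Theta_def)
  define x where "x = Q 1"
  have finZ1: "finite (Z 1)" using fin one by auto
  have xnn: "\<And>y. y \<in> Z 1 \<Longrightarrow> 0 \<le> x 1 y \<and> 0 \<le> x 2 y"
    using Qd[OF one T(1)] Qd[OF one T(2)] unfolding x_def is_dist_def by auto
  have xsum: "sum (x 1) (Z 1) = 1" "sum (x 2) (Z 1) = 1"
    using Qd[OF one T(1)] Qd[OF one T(2)] unfolding x_def is_dist_def by auto
  define top where "top y \<longleftrightarrow> rh * x 2 y \<le> x 1 y" for y
  define bot where "bot y \<longleftrightarrow> \<not> top y \<and> x 1 y \<le> rl * x 2 y" for y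
  define F where "F \<theta> y = (if top y then (if \<theta> = 1 then rh * x 2 y else x 2 y)
      else if bot y then (if \<theta> = 1 then x 1 y else x 1 y / rl) else x \<theta> y)" for \<theta> :: nat and y
  define Gt where "Gt \<theta> y = (if top y \<and> \<theta> = 1 then x 1 y - rh * x 2 y else 0)" for \<theta> :: nat and y
  define Gb where "Gb \<theta> y = (if bot y \<and> \<theta> = 2 then x 2 y - x 1 y / rl else 0)" for \<theta> :: nat and y
  have Fnn: "0 \<le> F \<theta> y" if "y \<in> Z 1" "\<theta> \<in> Theta" for \<theta> y
    using xnn[OF that(1)] that(2) r unfolding F_def Theta_def by auto
  have Gtnn: "0 \<le> Gt \<theta> y" for \<theta> y unfolding Gt_def top_def by auto
  have Gbnn: "0 \<le> Gb \<theta> y" for \<theta> y unfolding Gb_def bot_def using r by (auto simp: field_simps)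
  have decomp: "F \<theta> y + Gt \<theta> y + Gb \<theta> y = x \<theta> y" if "\<theta> \<in> Theta" for \<theta> y
    using that r unfolding F_def Gt_def Gb_def bot_def Theta_def by auto
  define SF where "SF \<theta> = (\<Sum>y\<in>Z 1. F \<theta> y)" for \<theta>
  define PT where "PT = (\<Sum>y\<in>Z 1. Gt 1 y)"
  define PB where "PB = (\<Sum>y\<in>Z 1. Gb 2 y)"
  have SF1: "SF 1 + PT = 1"
  proof -
    have "SF 1 + PT = (\<Sum>y\<in>Z 1. F 1 y + Gt 1 y + Gb 1 y)"
      unfolding SF_def PT_def Gb_def by (simp add: sum.distrib)
    also have "\<dots> = 1" using decomp[OF T(1)] xsum by simp
    finally show ?thesis .
  qed
  have SF2: "SF 2 + PB = 1"
  proof -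
    have "SF 2 + PB = (\<Sum>y\<in>Z 1. F 2 y + Gt 2 y + Gb 2 y)"
      unfolding SF_def PB_def Gt_def by (simp add: sum.distrib)
    also have "\<dots> = 1" using decomp[OF T(2)] xsum by simp
    finally show ?thesis .
  qed
  define Mi where "Mi i = (\<Sum>y\<in>Z i. min (Q i 1 y) (Q i 2 y))" for i
  have Fle: "F \<theta> y \<le> K * min (x 1 y) (x 2 y)" if "y \<in> Z 1" "\<theta> \<in> Theta" for \<theta> y
  proof -
    note fb = Fbound[OF conjunct1[OF xnn[OF that(1)]] conjunct2[OF xnn[OF that(1)]] r K]
    show ?thesis
    proof (cases "top y")
      case True thus ?thesis using fb(1) that(2) unfolding F_def top_def Theta_def by auto
    next
      case nt: False
      show ?thesis
      proof (cases "bot y")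
        case True thus ?thesis using fb(2) that(2) nt unfolding F_def bot_def Theta_def by auto
      next
        case False
        hence "rl * x 2 y < x 1 y" "x 1 y < rh * x 2 y" using nt unfolding bot_def top_def by auto
        thus ?thesis using fb(3) that(2) nt False unfolding F_def Theta_def by auto
      qed
    qed
  qed
  have SFle: "SF \<theta> \<le> Mi i" if "i \<in> I - {1}" "\<theta> \<in> Theta" for i \<theta>
  proof -
    have "SF \<theta> \<le> (\<Sum>y\<in>Z 1. K * min (x 1 y) (x 2 y))"
      unfolding SF_def using Fle that(2) by (intro sum_mono) auto
    also have "\<dots> = K * Mi 1" unfolding Mi_def x_def by (simp add: sum_distrib_left)
    also have "\<dots> \<le> Mi i" using big[OF that(1)] unfolding Mi_def by simp
    finally show ?thesis .
  qed
  have Mipos: "0 < Mi i" if "i \<in> I - {1}" for i using big[OF that] unfolding Mi_def by simp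
  have SFnn: "0 \<le> SF \<theta>" if "\<theta> \<in> Theta" for \<theta> unfolding SF_def using Fnn that by (intro sum_nonneg) auto
  define c where "c i y = min (Q i 1 y) (Q i 2 y) / Mi i" for i y
  define L1 where "L1 i y = Q i 1 y - c i y * SF 1" for i y
  define L2 where "L2 i y = Q i 2 y - c i y * SF 2" for i y
  define et where "et i y = L1 i y / PT" for i y
  define eb where "eb i y = L2 i y / PB" for i y
  have Qnn: "0 \<le> Q i \<theta> y" if "i \<in> I" "\<theta> \<in> Theta" "y \<in> Z i" for i \<theta> y
    using Qd[OF that(1,2)] that(3) unfolding is_dist_def by auto
  have Qsum: "sum (Q i \<theta>) (Z i) = 1" if "i \<in> I" "\<theta> \<in> Theta" for i \<theta>
    using Qd[OF that] unfolding is_dist_def by auto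
  have cnn: "0 \<le> c i y" if "i \<in> I - {1}" "y \<in> Z i" for i y
    using Qnn[of i 1 y] Qnn[of i 2 y] that T Mipos[OF that(1)] unfolding c_def by auto
  have csum: "(\<Sum>y\<in>Z i. c i y) = 1" if "i \<in> I - {1}" for i
    using Mipos[OF that] unfolding c_def Mi_def by (simp add: sum_divide_distrib[symmetric])
  have cSF: "c i y * SF \<theta> \<le> Q i \<theta> y" if "i \<in> I - {1}" "y \<in> Z i" "\<theta> \<in> Theta" for i y \<theta>
  proof -
    have mn: "0 \<le> min (Q i 1 y) (Q i 2 y)" using Qnn[of i 1 y] Qnn[of i 2 y] that T by auto
    have "c i y * SF \<theta> = min (Q i 1 y) (Q i 2 y) * (SF \<theta> / Mi i)" unfolding c_def by simp
    also have "\<dots> \<le> min (Q i 1 y) (Q i 2 y) * 1"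
      using SFle[OF that(1,3)] Mipos[OF that(1)] mn by (intro mult_left_mono) (auto simp: field_simps)
    also have "\<dots> \<le> Q i \<theta> y" using that(3) unfolding Theta_def by auto
    finally show ?thesis .
  qed
  have L1nn: "0 \<le> L1 i y" and L2nn: "0 \<le> L2 i y" if "i \<in> I - {1}" "y \<in> Z i" for i y
    using cSF[OF that T(1)] cSF[OF that T(2)] unfolding L1_def L2_def by auto
  have L1sum: "(\<Sum>y\<in>Z i. L1 i y) = PT" and L2sum: "(\<Sum>y\<in>Z i. L2 i y) = PB" if "i \<in> I - {1}" for i
  proof -
    show "(\<Sum>y\<in>Z i. L1 i y) = PT"
      unfolding L1_def using Qsum[of i 1] csum[OF that] that T SF1
      by (simp add: sum_subtractf sum_distrib_right[symmetric])
    show "(\<Sum>y\<in>Z i. L2 i y) = PB"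
      unfolding L2_def using Qsum[of i 2] csum[OF that] that T SF2
      by (simp add: sum_subtractf sum_distrib_right[symmetric])
  qed
  have PTnn: "0 \<le> PT" unfolding PT_def using Gtnn by (intro sum_nonneg) auto
  have PBnn: "0 \<le> PB" unfolding PB_def using Gbnn by (intro sum_nonneg) auto
  have L1z: "L1 i y = 0" if "PT = 0" "i \<in> I - {1}" "y \<in> Z i" for i y
  proof -
    have "\<forall>y\<in>Z i. L1 i y = 0"
      using sum_nonneg_eq_0_iff[of "Z i" "L1 i"] L1sum[OF that(2)] that(1) L1nn[OF that(2)] fin that(2) by auto
    thus ?thesis using that(3) by auto
  qed
  have L2z: "L2 i y = 0" if "PB = 0" "i \<in> I - {1}" "y \<in> Z i" for i y
  proof -
    have "\<forall>y\<in>Z i. L2 i y = 0"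
      using sum_nonneg_eq_0_iff[of "Z i" "L2 i"] L2sum[OF that(2)] that(1) L2nn[OF that(2)] fin that(2) by auto
    thus ?thesis using that(3) by auto
  qed
  have Gtz: "Gt \<theta> y = 0" if "PT = 0" "y \<in> Z 1" for \<theta> y
  proof -
    have "\<forall>y\<in>Z 1. Gt 1 y = 0"
      using sum_nonneg_eq_0_iff[of "Z 1" "Gt 1"] that(1) Gtnn finZ1 unfolding PT_def by auto
    thus ?thesis using that(2) unfolding Gt_def by (auto split: if_splits)
  qed
  have Gbz: "Gb \<theta> y = 0" if "PB = 0" "y \<in> Z 1" for \<theta> y
  proof -
    have "\<forall>y\<in>Z 1. Gb 2 y = 0"
      using sum_nonneg_eq_0_iff[of "Z 1" "Gb 2"] that(1) Gbnn finZ1 unfolding PB_def by auto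
    thus ?thesis using that(2) unfolding Gb_def by (auto split: if_splits)
  qed
  have etnn: "0 \<le> et i y" and ebnn: "0 \<le> eb i y" if "i \<in> I - {1}" "y \<in> Z i" for i y
    using L1nn[OF that] L2nn[OF that] PTnn PBnn unfolding et_def eb_def by auto
  have etsum: "(\<Sum>y\<in>Z i. et i y) = 1" if "PT \<noteq> 0" "i \<in> I - {1}" for i
    using L1sum[OF that(2)] that(1) unfolding et_def by (simp add: sum_divide_distrib[symmetric])
  have ebsum: "(\<Sum>y\<in>Z i. eb i y) = 1" if "PB \<noteq> 0" "i \<in> I - {1}" for i
    using L2sum[OF that(2)] that(1) unfolding eb_def by (simp add: sum_divide_distrib[symmetric])
  have etQ: "et i y * PT = L1 i y" if "i \<in> I - {1}" "y \<in> Z i" for i y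
    using L1z[OF _ that] unfolding et_def by (cases "PT = 0") auto
  have ebQ: "eb i y * PB = L2 i y" if "i \<in> I - {1}" "y \<in> Z i" for i y
    using L2z[OF _ that] unfolding eb_def by (cases "PB = 0") auto
  define h1 where "h1 \<theta> i y = (if i = 1 then F \<theta> y else c i y)" for \<theta> i y
  define h2 where "h2 \<theta> i y = (if i = 1 then Gt \<theta> y else et i y)" for \<theta> i y
  define h3 where "h3 \<theta> i y = (if i = 1 then Gb \<theta> y else eb i y)" for \<theta> i y
  define R where "R \<theta> z = (\<Prod>i\<in>I. h1 \<theta> i (z i)) + (\<Prod>i\<in>I. h2 \<theta> i (z i)) + (\<Prod>i\<in>I. h3 \<theta> i (z i))" for \<theta> z

  have finP: "finite (PiE I Z)" using fin by (intro finite_PiE) auto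
  have hsum1: "(\<Prod>i\<in>J. \<Sum>y\<in>Z i. h1 \<theta> i y) = 1" if "J \<subseteq> I - {1}" for J \<theta>
  proof (intro prod.neutral ballI)
    fix i assume "i \<in> J"
    hence iJ: "i \<in> I - {1}" using that(1) by auto
    hence "(\<lambda>y. h1 \<theta> i y) = c i" unfolding h1_def by auto
    thus "(\<Sum>y\<in>Z i. h1 \<theta> i y) = 1" using csum[OF iJ]  by simp
  qed
  have hsum2: "(\<Prod>i\<in>J. \<Sum>y\<in>Z i. h2 \<theta> i y) = 1" if "J \<subseteq> I - {1}" "PT \<noteq> 0" for J \<theta>
  proof (intro prod.neutral ballI)
    fix i assume "i \<in> J"
    hence iJ: "i \<in> I - {1}" using that(1) by auto
    hence "(\<lambda>y. h2 \<theta> i y) = et i" unfolding h2_def by auto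
    thus "(\<Sum>y\<in>Z i. h2 \<theta> i y) = 1" using etsum[OF _ iJ] that(2) by simp
  qed
  have hsum3: "(\<Prod>i\<in>J. \<Sum>y\<in>Z i. h3 \<theta> i y) = 1" if "J \<subseteq> I - {1}" "PB \<noteq> 0" for J \<theta>
  proof (intro prod.neutral ballI)
    fix i assume "i \<in> J"
    hence iJ: "i \<in> I - {1}" using that(1) by auto
    hence "(\<lambda>y. h3 \<theta> i y) = eb i" unfolding h3_def by auto
    thus "(\<Sum>y\<in>Z i. h3 \<theta> i y) = 1" using ebsum[OF _ iJ] that(2) by simp
  qed
  have marg: "(\<Sum>z\<in>{z\<in>PiE I Z. z j = w}. R \<theta> z)
      = h1 \<theta> j w * (\<Prod>i\<in>I - {j}. \<Sum>y\<in>Z i. h1 \<theta> i y)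
      + h2 \<theta> j w * (\<Prod>i\<in>I - {j}. \<Sum>y\<in>Z i. h2 \<theta> i y)
      + h3 \<theta> j w * (\<Prod>i\<in>I - {j}. \<Sum>y\<in>Z i. h3 \<theta> i y)" if "j \<in> I" "w \<in> Z j" for j w \<theta>
    unfolding R_def sum.distrib
    using PiE_prod_marg[where I=I and Z=Z and j=j and zj=w and h="h1 \<theta>", OF fin that]
      PiE_prod_marg[where I=I and Z=Z and j=j and zj=w and h="h2 \<theta>", OF fin that]
      PiE_prod_marg[where I=I and Z=Z and j=j and zj=w and h="h3 \<theta>", OF fin that] by simp
  have marg1: "(\<Sum>z\<in>{z\<in>PiE I Z. z 1 = y}. R \<theta> z) = Q 1 \<theta> y" if "y \<in> Z 1" "\<theta> \<in> Theta" for y \<theta>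
  proof -
    have e1: "h1 \<theta> 1 y * (\<Prod>i\<in>I - {1}. \<Sum>y\<in>Z i. h1 \<theta> i y) = F \<theta> y"
      using hsum1[of "I - {1}" \<theta>] unfolding h1_def by simp
    have e2: "h2 \<theta> 1 y * (\<Prod>i\<in>I - {1}. \<Sum>y\<in>Z i. h2 \<theta> i y) = Gt \<theta> y"
    proof (cases "PT = 0")
      case True thus ?thesis using Gtz[OF True that(1)] unfolding h2_def by simp
    next
      case False thus ?thesis using hsum2[of "I - {1}" \<theta>] unfolding h2_def by simp
    qed
    have e3: "h3 \<theta> 1 y * (\<Prod>i\<in>I - {1}. \<Sum>y\<in>Z i. h3 \<theta> i y) = Gb \<theta> y"
    proof (cases "PB = 0")
      case True thus ?thesis using Gbz[OF True that(1)] unfolding h3_def by simp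
    next
      case False thus ?thesis using hsum3[of "I - {1}" \<theta>] unfolding h3_def by simp
    qed
    show ?thesis unfolding marg[OF one that(1)] e1 e2 e3 decomp[OF that(2)] x_def ..
  qed
  have split1: "(\<Prod>i\<in>I - {j}. g i) = g 1 * (\<Prod>i\<in>I - {j} - {1}. g i)" if "j \<in> I" "j \<noteq> 1" for j and g :: "nat \<Rightarrow> real"
    using that one fin by (intro prod.remove) auto
  have margj: "(\<Sum>z\<in>{z\<in>PiE I Z. z j = w}. R \<theta> z) = Q j \<theta> w" if "j \<in> I" "j \<noteq> 1" "w \<in> Z j" "\<theta> \<in> Theta" for j w \<theta>
  proof -
    have jI: "j \<in> I - {1}" using that by auto
    have sub: "I - {j} - {1} \<subseteq> I - {1}" by auto
    have e1: "h1 \<theta> j w * (\<Prod>i\<in>I - {j}. \<Sum>y\<in>Z i. h1 \<theta> i y) = c j w * SF \<theta>"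
      unfolding split1[OF that(1,2)] hsum1[OF sub] using that(2) unfolding h1_def SF_def by simp
    have e2: "h2 \<theta> j w * (\<Prod>i\<in>I - {j}. \<Sum>y\<in>Z i. h2 \<theta> i y) = et j w * (\<Sum>y\<in>Z 1. Gt \<theta> y)"
    proof (cases "PT = 0")
      case True
      have "(\<Sum>y\<in>Z 1. Gt \<theta> y) = 0" using Gtz[OF True] by simp
      thus ?thesis unfolding split1[OF that(1,2)] using that(2) unfolding h2_def by simp
    next
      case False thus ?thesis unfolding split1[OF that(1,2)] hsum2[OF sub False] using that(2) unfolding h2_def by simp
    qed
    have e3: "h3 \<theta> j w * (\<Prod>i\<in>I - {j}. \<Sum>y\<in>Z i. h3 \<theta> i y) = eb j w * (\<Sum>y\<in>Z 1. Gb \<theta> y)"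
    proof (cases "PB = 0")
      case True
      have "(\<Sum>y\<in>Z 1. Gb \<theta> y) = 0" using Gbz[OF True] by simp
      thus ?thesis unfolding split1[OF that(1,2)] using that(2) unfolding h3_def by simp
    next
      case False thus ?thesis unfolding split1[OF that(1,2)] hsum3[OF sub False] using that(2) unfolding h3_def by simp
    qed
    have th: "\<theta> = 1 \<or> \<theta> = 2" using that(4) unfolding Theta_def by auto
    show ?thesis
    proof (cases "\<theta> = 1")
      case True
      have "(\<Sum>y\<in>Z 1. Gt \<theta> y) = PT" "(\<Sum>y\<in>Z 1. Gb \<theta> y) = 0"
        unfolding PT_def Gb_def using True by auto
      thus ?thesis unfolding marg[OF that(1,3)] e1 e2 e3 using etQ[OF jI that(3)] True unfolding L1_def by simp
    next
      case False
      hence t2: "\<theta> = 2" using th by simp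
      have "(\<Sum>y\<in>Z 1. Gt \<theta> y) = 0" "(\<Sum>y\<in>Z 1. Gb \<theta> y) = PB"
        unfolding PB_def Gt_def using t2 by auto
      thus ?thesis unfolding marg[OF that(1,3)] e1 e2 e3 using ebQ[OF jI that(3)] t2 unfolding L2_def by simp
    qed
  qed
  have hnn: "0 \<le> h1 \<theta> i y \<and> 0 \<le> h2 \<theta> i y \<and> 0 \<le> h3 \<theta> i y" if "i \<in> I" "y \<in> Z i" "\<theta> \<in> Theta" for \<theta> i y
    using that Fnn Gtnn Gbnn cnn etnn ebnn unfolding h1_def h2_def h3_def by auto
  have Rnn: "0 \<le> R \<theta> z" if "z \<in> PiE I Z" "\<theta> \<in> Theta" for \<theta> z
    using that hnn unfolding R_def by (auto intro!: add_nonneg_nonneg prod_nonneg simp: PiE_iff)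
  have Rsum: "sum (R \<theta>) (PiE I Z) = 1" if "\<theta> \<in> Theta" for \<theta>
  proof -
    have "sum (R \<theta>) (PiE I Z) = (\<Sum>y\<in>Z 1. \<Sum>z\<in>{z\<in>PiE I Z. z 1 = y}. R \<theta> z)"
      using finP finZ1 one by (intro sum.group[symmetric]) (auto simp: PiE_iff)
    also have "\<dots> = (\<Sum>y\<in>Z 1. Q 1 \<theta> y)" using marg1 that by simp
    also have "\<dots> = 1" using Qsum[OF one that] .
    finally show ?thesis .
  qed
  have margall: "(\<Sum>z\<in>{z\<in>PiE I Z. z j = zj}. R \<theta> z) = Q j \<theta> zj"
    if "\<theta> \<in> Theta" "j \<in> I" "zj \<in> Z j" for \<theta> j zj
  proof (cases "j = 1")
    case True thus ?thesis using marg1 that by simp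
  next
    case False thus ?thesis using margj that by simp
  qed
  have Rc: "R \<in> couplings Theta I Z Q"
    unfolding couplings_def is_dist_def using Rnn Rsum margall by auto
  have "\<forall>y. \<exists>a\<in>A. \<forall>b\<in>A. x 1 y * u 1 b + x 2 y * u 2 b \<le> x 1 y * u 1 a + x 2 y * u 2 a"
  proof
    fix y show "\<exists>a\<in>A. \<forall>b\<in>A. x 1 y * u 1 b + x 2 y * u 2 b \<le> x 1 y * u 1 a + x 2 y * u 2 a"
      using argmax_ex[OF A, of "\<lambda>a. x 1 y * u 1 a + x 2 y * u 2 a"] by simp
  qed
  then obtain am where am: "\<And>y. am y \<in> A" "\<And>y b. b \<in> A \<Longrightarrow> x 1 y * u 1 b + x 2 y * u 2 b \<le> x 1 y * u 1 (am y) + x 2 y * u 2 (am y)"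
    by metis
  define act where "act y = (if top y then a1 else if bot y then a2 else am y)" for y
  have actA: "act y \<in> A" for y unfolding act_def using a1 a2 am by auto
  have optF: "F 1 y * u 1 b + F 2 y * u 2 b \<le> F 1 y * u 1 (act y) + F 2 y * u 2 (act y)"
    and optGt: "Gt 1 y * u 1 b + Gt 2 y * u 2 b \<le> Gt 1 y * u 1 (act y) + Gt 2 y * u 2 (act y)"
    and optGb: "Gb 1 y * u 1 b + Gb 2 y * u 2 b \<le> Gb 1 y * u 1 (act y) + Gb 2 y * u 2 (act y)"
    if "y \<in> Z 1" "b \<in> A" for y b
  proof -
    have x0: "0 \<le> x 1 y" "0 \<le> x 2 y" using xnn[OF that(1)] by auto
    have "F 1 y * u 1 b + F 2 y * u 2 b \<le> F 1 y * u 1 (act y) + F 2 y * u 2 (act y)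
        \<and> Gt 1 y * u 1 b + Gt 2 y * u 2 b \<le> Gt 1 y * u 1 (act y) + Gt 2 y * u 2 (act y)
        \<and> Gb 1 y * u 1 b + Gb 2 y * u 2 b \<le> Gb 1 y * u 1 (act y) + Gb 2 y * u 2 (act y)"
    proof (cases "top y")
      case True
      have "x 2 y * (rh * u 1 b + u 2 b) \<le> x 2 y * (rh * u 1 a1 + u 2 a1)"
        using a1(2)[OF that(2)] x0 by (intro mult_left_mono) auto
      moreover have "(x 1 y - rh * x 2 y) * u 1 b \<le> (x 1 y - rh * x 2 y) * u 1 a1"
        using a1(2)[OF that(2)] True unfolding top_def by (intro mult_left_mono) auto
      ultimately show ?thesis using True unfolding F_def Gt_def Gb_def act_def bot_def
        by (simp add: algebra_simps)
    next
      case nt: False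
      show ?thesis
      proof (cases "bot y")
        case True
        have "(x 1 y / rl) * (rl * u 1 b + u 2 b) \<le> (x 1 y / rl) * (rl * u 1 a2 + u 2 a2)"
          using a2(2)[OF that(2)] x0 r by (intro mult_left_mono) auto
        hence f: "x 1 y * u 1 b + x 1 y / rl * u 2 b \<le> x 1 y * u 1 a2 + x 1 y / rl * u 2 a2"
          using r by (simp add: algebra_simps)
        have "(x 2 y - x 1 y / rl) * u 2 b \<le> (x 2 y - x 1 y / rl) * u 2 a2"
          using a2(2)[OF that(2)] True r unfolding bot_def by (intro mult_left_mono) (auto simp: field_simps)
        thus ?thesis using f True nt unfolding F_def Gt_def Gb_def act_def
          by (simp add: algebra_simps)
      next
        case False
        thus ?thesis using nt am(2)[OF that(2), of y] unfolding F_def Gt_def Gb_def act_def by simp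
      qed
    qed
    thus "F 1 y * u 1 b + F 2 y * u 2 b \<le> F 1 y * u 1 (act y) + F 2 y * u 2 (act y)"
      "Gt 1 y * u 1 b + Gt 2 y * u 2 b \<le> Gt 1 y * u 1 (act y) + Gt 2 y * u 2 (act y)"
      "Gb 1 y * u 1 b + Gb 2 y * u 2 b \<le> Gb 1 y * u 1 (act y) + Gb 2 y * u 2 (act y)" by auto
  qed
  define \<alpha> where "\<alpha> z = (\<Prod>i\<in>I - {1}. c i (z i))" for z :: "nat \<Rightarrow> 'z"
  define \<beta> where "\<beta> z = (\<Prod>i\<in>I - {1}. et i (z i))" for z :: "nat \<Rightarrow> 'z"
  define \<gamma> where "\<gamma> z = (\<Prod>i\<in>I - {1}. eb i (z i))" for z :: "nat \<Rightarrow> 'z"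
  have Rform: "R \<theta> z = \<alpha> z * F \<theta> (z 1) + \<beta> z * Gt \<theta> (z 1) + \<gamma> z * Gb \<theta> (z 1)" for \<theta> z
  proof -
    have p: "(\<Prod>i\<in>I. g i) = g 1 * (\<Prod>i\<in>I - {1}. g i)" for g :: "nat \<Rightarrow> real"
      using fin one by (intro prod.remove)
    have "(\<Prod>i\<in>I - {1}. h1 \<theta> i (z i)) = \<alpha> z" "(\<Prod>i\<in>I - {1}. h2 \<theta> i (z i)) = \<beta> z"
      "(\<Prod>i\<in>I - {1}. h3 \<theta> i (z i)) = \<gamma> z"
      unfolding \<alpha>_def \<beta>_def \<gamma>_def h1_def h2_def h3_def by (auto intro!: prod.cong)
    thus ?thesis unfolding R_def p by (simp add: h1_def h2_def h3_def mult.commute)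
  qed
  have abgnn: "0 \<le> \<alpha> z \<and> 0 \<le> \<beta> z \<and> 0 \<le> \<gamma> z" if "z \<in> PiE I Z" for z
  proof -
    have zi: "\<And>i. i \<in> I - {1} \<Longrightarrow> z i \<in> Z i" using that by (auto simp: PiE_iff)
    show ?thesis unfolding \<alpha>_def \<beta>_def \<gamma>_def using zi cnn etnn ebnn
      by (intro conjI prod_nonneg) blast+
  qed
  have optR: "R 1 z * u 1 b + R 2 z * u 2 b \<le> R 1 z * u 1 (act (z 1)) + R 2 z * u 2 (act (z 1))"
    if "z \<in> PiE I Z" "b \<in> A" for z b
  proof -
    have z1: "z 1 \<in> Z 1" using that(1) one by (auto simp: PiE_iff)
    note ab = abgnn[OF that(1)]
    have e: "R 1 z * u 1 a + R 2 z * u 2 a = \<alpha> z * (F 1 (z 1) * u 1 a + F 2 (z 1) * u 2 a)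
        + \<beta> z * (Gt 1 (z 1) * u 1 a + Gt 2 (z 1) * u 2 a) + \<gamma> z * (Gb 1 (z 1) * u 1 a + Gb 2 (z 1) * u 2 a)" for a
      unfolding Rform by (simp add: algebra_simps)
    show ?thesis unfolding e
      using mult_left_mono[OF optF[OF z1 that(2)], of "\<alpha> z"] mult_left_mono[OF optGt[OF z1 that(2)], of "\<beta> z"]
        mult_left_mono[OF optGb[OF z1 that(2)], of "\<gamma> z"] ab by linarith
  qed
  have pay: "payoff Theta (PiE I Z) R A u \<sigma> \<le> payoff Theta (Z 1) (Q 1) A u (\<lambda>y a. if a = act y then 1 else 0)"
    if \<sigma>: "\<sigma> \<in> strategies (PiE I Z) A" for \<sigma>
  proof -
    have sd: "(\<forall>a\<in>A. 0 \<le> \<sigma> z a) \<and> sum (\<sigma> z) A = 1" if "z \<in> PiE I Z" for z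
      using \<sigma> that unfolding strategies_def is_dist_def by auto
    have "payoff Theta (PiE I Z) R A u \<sigma>
        = (\<Sum>z\<in>PiE I Z. \<Sum>a\<in>A. \<sigma> z a * (R 1 z * u 1 a + R 2 z * u 2 a))"
      unfolding payoff_def Theta_sum
      by (simp add: sum.distrib[symmetric] sum_distrib_left algebra_simps)
    also have "\<dots> \<le> (\<Sum>z\<in>PiE I Z. \<Sum>a\<in>A. \<sigma> z a * (R 1 z * u 1 (act (z 1)) + R 2 z * u 2 (act (z 1))))"
      using optR sd by (intro sum_mono mult_left_mono) auto
    also have "\<dots> = (\<Sum>z\<in>PiE I Z. R 1 z * u 1 (act (z 1)) + R 2 z * u 2 (act (z 1)))"
      using sd by (intro sum.cong refl) (simp add: sum_distrib_right[symmetric])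
    also have "\<dots> = (\<Sum>z\<in>PiE I Z. R 1 z * u 1 (act (z 1))) + (\<Sum>z\<in>PiE I Z. R 2 z * u 2 (act (z 1)))"
      by (simp add: sum.distrib)
    also have "\<dots> = (\<Sum>y\<in>Z 1. Q 1 1 y * u 1 (act y)) + (\<Sum>y\<in>Z 1. Q 1 2 y * u 2 (act y))"
      using coupling_z1[OF Rc fin one T(1), of "\<lambda>y. u 1 (act y)"]
        coupling_z1[OF Rc fin one T(2), of "\<lambda>y. u 2 (act y)"] by simp
    also have "\<dots> = payoff Theta (Z 1) (Q 1) A u (\<lambda>y a. if a = act y then 1 else 0)"
    proof -
      have d: "(\<Sum>a\<in>A. (if a = act y then 1 else 0) * u \<theta> a) = u \<theta> (act y)" for y \<theta>
      proof -
        have "(\<Sum>a\<in>A. (if a = act y then 1 else 0) * u \<theta> a) = (\<Sum>a\<in>A. if a = act y then u \<theta> a else 0)"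
          by (intro sum.cong) auto
        also have "\<dots> = u \<theta> (act y)" using actA A(1) by (simp add: sum.delta)
        finally show ?thesis .
      qed
      show ?thesis unfolding payoff_def Theta_sum d ..
    qed
    finally show ?thesis .
  qed
  show ?thesis using Rc actA pay by blast
qed



lemma power_exp_dist:
  assumes "is_experiment Theta Y P" "\<theta> \<in> Theta"
  shows "is_dist (power_carrier t Y) (power_exp P t \<theta>)"
proof -
  have d: "is_dist Y (P \<theta>)" "finite Y" using assms unfolding is_experiment_def by auto
  have "(\<Sum>z\<in>power_carrier t Y. power_exp P t \<theta> z) = (\<Sum>y\<in>Y. P \<theta> y) ^ t"
    unfolding power_carrier_def power_exp_def by (rule prod_sum_power[OF d(2)])
  moreover have "\<forall>z\<in>power_carrier t Y. 0 \<le> power_exp P t \<theta> z"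
    using d(1) unfolding power_carrier_def power_exp_def is_dist_def
    by (auto intro!: prod_nonneg simp: PiE_iff)
  ultimately show ?thesis using d(1) unfolding is_dist_def by simp
qed

theorem theorem4:
  fixes m :: nat and Y :: "nat \<Rightarrow> 'y set" and P :: "nat \<Rightarrow> nat \<Rightarrow> 'y \<Rightarrow> real"
    and A :: "'a set" and u :: "nat \<Rightarrow> 'a \<Rightarrow> real"
  assumes "1 \<le> m"
    and "\<forall>i\<in>{1..m}. is_experiment Theta (Y i) (P i)"
    and "\<forall>i\<in>{2..m}. chernoff (Y i) (P i) < chernoff (Y 1) (P 1)"
    and "finite A" and "A \<noteq> {}"
  shows "\<exists>t0. \<forall>t\<ge>t0.
    V_multi Theta {1..m} (\<lambda>i. power_carrier t (Y i)) (\<lambda>i. power_exp (P i) t) A u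
    = V_single Theta (power_carrier t (Y 1)) (power_exp (P 1) t) A u"
proof -
  note m = assms(1) and ex = assms(2) and ch = assms(3) and A = assms(4,5)
  have one: "(1::nat) \<in> {1..m}" using m by auto
  have ex1: "is_experiment Theta (Y 1) (P 1)" using ex one by auto
  obtain a1 rh where a1: "a1 \<in> A" "0 < rh"
      "\<And>b. b \<in> A \<Longrightarrow> u 1 b \<le> u 1 a1 \<and> rh * u 1 b + u 2 b \<le> rh * u 1 a1 + u 2 a1"
    using exists_extreme[OF A, of "u 1" "u 2"] by blast
  obtain a2 r2 where a2': "a2 \<in> A" "0 < r2"
      "\<And>b. b \<in> A \<Longrightarrow> u 2 b \<le> u 2 a2 \<and> r2 * u 2 b + u 1 b \<le> r2 * u 2 a2 + u 1 a2"
    using exists_extreme[OF A, of "u 2" "u 1"] by blast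
  define rl where "rl = 1 / r2"
  have rl: "0 < rl" unfolding rl_def using a2' by simp
  have a2: "u 2 b \<le> u 2 a2 \<and> rl * u 1 b + u 2 b \<le> rl * u 1 a2 + u 2 a2" if "b \<in> A" for b
  proof -
    have h: "r2 * u 2 b + u 1 b \<le> r2 * u 2 a2 + u 1 a2" using a2'(3)[OF that] by simp
    have "rl * (r2 * u 2 b + u 1 b) \<le> rl * (r2 * u 2 a2 + u 1 a2)"
      using h rl by (intro mult_left_mono) auto
    hence "rl * u 1 b + u 2 b \<le> rl * u 1 a2 + u 2 a2"
      using a2'(2) unfolding rl_def by (simp add: algebra_simps)
    thus ?thesis using a2'(3)[OF that] by simp
  qed
  define K where "K = 1 + rh + 1/rh + rl + 1/rl"
  have "\<forall>i\<in>{2..m}. eventually (\<lambda>t. K * Mmix t (Y 1) (P 1) \<le> Mmix t (Y i) (P i) \<and> 0 < Mmix t (Y i) (P i)) sequentially"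
  proof
    fix i assume i: "i \<in> {2..m}"
    hence exi: "is_experiment Theta (Y i) (P i)" using ex by auto
    show "eventually (\<lambda>t. K * Mmix t (Y 1) (P 1) \<le> Mmix t (Y i) (P i) \<and> 0 < Mmix t (Y i) (P i)) sequentially"
      by (rule asym[OF ex1 exi]) (use ch i in auto)
  qed
  hence "eventually (\<lambda>t. \<forall>i\<in>{2..m}. K * Mmix t (Y 1) (P 1) \<le> Mmix t (Y i) (P i) \<and> 0 < Mmix t (Y i) (P i)) sequentially"
    by (intro eventually_ball_finite) auto
  then obtain t0 where t0: "\<And>t. t \<ge> t0 \<Longrightarrow> \<forall>i\<in>{2..m}. K * Mmix t (Y 1) (P 1) \<le> Mmix t (Y i) (P i) \<and> 0 < Mmix t (Y i) (P i)"
    unfolding eventually_sequentially by blast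
  show ?thesis
  proof (intro exI[of _ t0] allI impI)
    fix t assume t: "t \<ge> t0"
    define Z where "Z i = power_carrier t (Y i)" for i
    define Q where "Q i = power_exp (P i) t" for i
    have fin: "finite {1..m}" "\<And>i. i \<in> {1..m} \<Longrightarrow> finite (Z i)"
      using ex unfolding Z_def power_carrier_def is_experiment_def by (auto intro!: finite_PiE)
    have Qd: "\<And>i \<theta>. i \<in> {1..m} \<Longrightarrow> \<theta> \<in> Theta \<Longrightarrow> is_dist (Z i) (Q i \<theta>)"
      unfolding Z_def Q_def using ex power_exp_dist by blast
    have big: "K * (\<Sum>y\<in>Z 1. min (Q 1 1 y) (Q 1 2 y)) \<le> (\<Sum>y\<in>Z i. min (Q i 1 y) (Q i 2 y))
                 \<and> 0 < (\<Sum>y\<in>Z i. min (Q i 1 y) (Q i 2 y))" if "i \<in> {1..m} - {1}" for i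
    proof -
      have "i \<in> {2..m}" using that by auto
      thus ?thesis using t0[OF t] unfolding Z_def Q_def Mmix_def by auto
    qed
    obtain R act where R: "R \<in> couplings Theta {1..m} Z Q" "\<forall>y\<in>Z 1. act y \<in> A"
      "\<forall>\<sigma>\<in>strategies (PiE {1..m} Z) A. payoff Theta (PiE {1..m} Z) R A u \<sigma>
         \<le> payoff Theta (Z 1) (Q 1) A u (\<lambda>y a. if a = act y then 1 else 0)"
      using coupling_construct[where I="{1..m}" and Z=Z and Q=Q and A=A and u=u and rh=rh and rl=rl and K=K, OF fin one Qd A a1(2) rl a1(1) a1(3) a2'(1) a2 K_def big] by blast
    have Q1: "\<forall>\<theta>\<in>Theta. is_dist (Z 1) (Q 1 \<theta>)" using Qd one by auto
    have "V_multi Theta {1..m} Z Q A u \<le> V_single Theta (Z 1) (Q 1) A u"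
      using R by (intro V_le[OF fin one A R(1) Q1]) auto
    moreover have "V_single Theta (Z 1) (Q 1) A u \<le> V_multi Theta {1..m} Z Q A u"
      by (rule V_ge[OF fin one A R(1) Q1])
    ultimately show "V_multi Theta {1..m} (\<lambda>i. power_carrier t (Y i)) (\<lambda>i. power_exp (P i) t) A u
      = V_single Theta (power_carrier t (Y 1)) (power_exp (P 1) t) A u"
      unfolding Z_def[abs_def] Q_def[abs_def] by simp
  qed
qed


end
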